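(* Let $p\in(0,1)$, $N=1/(1-p)$, $r\ge0$ an integer and $n\ge0$ even. If $G=(U,w,w')$ is a melonic graph of order $n$, then $$\mathcal A_r(G)\le 4^{n}\,p^{r/2}.$$
   Context: Trees. A 2-rooted ternary tree of order $n$ is a finite plane tree $U$ with a root vertex of degree 2 and $n$ true vertices of degree 4; each edge is internal or a leaf (half-edge). Each true vertex $v$ has parent edge $e_1(v)$ (towards the root) and ordered children edges $e_2(v),e_3(v),e_4(v)$. One root edge has type $\alpha$, the other $\bar\alpha$; if $e_1(v)$ has type $\tau$ then $e_2(v)$ has the other type and $e_3(v),e_4(v)$ have type $\tau$. Leaves of type $\alpha$ are leaves, of type $\bar\alpha$ anti-leaves ($n+1$ each). A heap-ordering labels true vertices bijectively by $\{1,\dots,n\}$, increasing from parent to child. Graphs. For even $n$, a graph of order $n$ is $G=(U,w,w')$: $U$ heap-ordered; $w$ a bijection leaves $\to$ anti-leaves (dashed edges; internal edges are solid); $w'$ a partition of true vertices into $n/2$ pairs (wavy edges) with, for each pair $\{v,v'\}$ ($v$ of smaller label), one of eight propagators in $(S,j,k)=(S_v,j_v,k_v)$, $(S',j',k')=(S_{v'},j_{v'},k_{v'})$: $\delta_{jj'}\delta_{kk'}$, $\delta_{j,S-j'}\delta_{kk'}$, $\delta_{jj'}\delta_{k,S-k'}$, $\delta_{j,S-j'}\delta_{k,S-k'}$, $\delta_{jk'}\delta_{kj'}$, $\delta_{j,S-k'}\delta_{kj'}$, $\delta_{jk'}\delta_{k,S-j'}$, $\delta_{j,S-k'}\delta_{k,S-j'}$,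 together with $S=S'$. Amplitude. A momentum attribution gives each true vertex $S_v\ge0$, $0\le j_v,k_v\le S_v$ and momenta $j_v,S_v-j_v,k_v,S_v-k_v$ to the ends at $v$ of $e_1,\dots,e_4$. It is admissible (for root momentum $r$) if solid edges get equal momenta at both ends, both root edges carry momentum $r$, every dashed edge $e$ joins leaves of equal momentum $m(e)$, and every wavy edge satisfies $S_v=S_{v'}$ and its propagator. $\mathcal A_r(G):=N^{-n}\sum_{\text{admissible}}\prod_{e\text{ dashed}}p^{m(e)}$. Melonic graphs. Each propagator (with $S=S'$) induces a bijection from the edge-ends at $v$ to those at $v'$ (matching identified momenta). For two true vertices joined by three edges, the leading propagator is the one whose bijection maps the $v$-end of each joining edge to its $v'$-end. The trivial graph ($n=0$) is the root with a leaf and an anti-leaf joined by a dashed edge. A graph is melonic if (ignoring heap-orderings) it arises from the trivial graph by repeatedly inserting two new true vertices $v,v'$, joined to each other by three edges and by a wavy edge carrying the leading propagator, in one of these ways: (I) into a dashed edge $\{x,y\}$: $e_1(v)$ at $x$, $e_1(v')$ at $y$, dashed edges $e_2(v)$–$e_2(v')$ and $\{e_3(v),e_4(v)\}$ bijectively to $\{e_3(v'),e_4(v')\}$; (II) into a dashed edge $\{z,z'\}$: $e_1(v)$ at $z$, $e_1(v')=e_2(v)$, dashed edges $e_2(v')$–$z'$ and $\{e_3(v),e_4(v)\}$ bijectively to $\{e_3(v'),e_4(v')\}$; (III) into a dashed edge $\{z,z'\}$: $e_1(v)$ at $z$, $e_1(v')=e_a(v)$ ($a\in\{3,4\}$, $b$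 the other), dashed edges $e_2(v)$–(one of $e_3(v'),e_4(v')$), $e_b(v)$–$e_2(v')$, remaining child leaf of $v'$–$z'$; (IIs) into a solid edge from $u$ to child $z$: $v$ below $u$, $e_1(v')=e_2(v)$, $e_1(z)=e_2(v')$, dashed edges $\{e_3(v),e_4(v)\}$ bijectively to $\{e_3(v'),e_4(v')\}$; (IIIs) as (IIs) but $e_1(v')=e_a(v)$, $a\in\{3,4\}$, $e_1(z)=e_c(v')$, $c\in\{3,4\}$, dashed edges $e_2(v)$–(other of $e_3(v'),e_4(v')$) and $e_b(v)$–$e_2(v')$. *)

theory Defs
  imports "HOL-Analysis.Analysis"
begin

text \<open>RootA / RootB are the two root edges (of type alpha / anti-alpha);
  Ch u i (i in {2,3,4}) is the child edge e_i(u) of the true vertex u.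
  A true vertex v is attached through its parent edge e_1(v) to the slot gpar v.\<close>
datatype slot = RootA | RootB | Ch nat nat

record graph =
  gV    :: "nat set"
  gpar  :: "nat \<Rightarrow> slot"        \<comment> \<open>slot to which e_1(v) is attached\<close>
  gdash :: "slot \<Rightarrow> slot"       \<comment> \<open>dashed edges, as an involution on leaves (w together with w^-1)\<close>
  gmate :: "nat \<Rightarrow> nat"         \<comment> \<open>wavy edges: partner of v\<close>
  gprop :: "nat \<Rightarrow> nat"         \<comment> \<open>propagator index 0..7, stored at the smaller vertex of the pair\<close>

definition slots :: "graph \<Rightarrow> slot set" where
  "slots G = {RootA, RootB} \<union> {Ch u i | u i. u \<in> gV G \<and> i \<in> {2,3,4}}"

definition leaf_slots :: "graph \<Rightarrow> slot set" where
  "leaf_slots G = slots G - gpar G ` gV G"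

text \<open>Edge types: True = alpha, False = anti-alpha.\<close>
inductive sty :: "graph \<Rightarrow> slot \<Rightarrow> bool \<Rightarrow> bool" for G where
  "sty G RootA True"
| "sty G RootB False"
| "u \<in> gV G \<Longrightarrow> sty G (gpar G u) b \<Longrightarrow> sty G (Ch u 2) (\<not> b)"
| "u \<in> gV G \<Longrightarrow> sty G (gpar G u) b \<Longrightarrow> i \<in> {3,4} \<Longrightarrow> sty G (Ch u i) b"

definition lvs :: "graph \<Rightarrow> bool \<Rightarrow> slot set" where
  "lvs G b = {s \<in> leaf_slots G. sty G s b}"

definition is_graph :: "nat \<Rightarrow> graph \<Rightarrow> bool" where
  "is_graph n G \<longleftrightarrow>
     gV G = {1..n} \<and>
     (\<forall>v\<in>gV G. gpar G v \<in> slots G) \<and>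
     inj_on (gpar G) (gV G) \<and>
     (\<forall>v\<in>gV G. \<forall>u i. gpar G v = Ch u i \<longrightarrow> u < v) \<and>
     bij_betw (gdash G) (lvs G True) (lvs G False) \<and>
     (\<forall>x\<in>lvs G True. gdash G (gdash G x) = x) \<and>
     (\<forall>v\<in>gV G. gmate G v \<in> gV G \<and> gmate G v \<noteq> v \<and> gmate G (gmate G v) = v) \<and>
     (\<forall>v\<in>gV G. v < gmate G v \<longrightarrow> gprop G v < 8)"

text \<open>The eight propagators, for (S,j,k) at v (smaller label) and (S',j',k') at v'
  (the condition S = S' is imposed separately).\<close>
fun propc :: "nat \<Rightarrow> nat \<times> nat \<times> nat \<Rightarrow> nat \<times> nat \<times> nat \<Rightarrow> bool" where
  "propc t (S,j,k) (S',j',k') =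
    (if t = 0 then j = j' \<and> k = k'
     else if t = 1 then j = S - j' \<and> k = k'
     else if t = 2 then j = j' \<and> k = S - k'
     else if t = 3 then j = S - j' \<and> k = S - k'
     else if t = 4 then j = k' \<and> k = j'
     else if t = 5 then j = S - k' \<and> k = j'
     else if t = 6 then j = k' \<and> k = S - j'
     else if t = 7 then j = S - k' \<and> k = S - j'
     else False)"

text \<open>The bijection from the edge-ends e_1..e_4 at v to those at v' induced by
  propagator t (matching identified momenta j, S-j, k, S-k).\<close>
definition pbij :: "nat \<Rightarrow> nat \<Rightarrow> nat" where
  "pbij t i = [[1,2,3,4],[2,1,3,4],[1,2,4,3],[2,1,4,3],
               [3,4,1,2],[4,3,1,2],[3,4,2,1],[4,3,2,1]] ! t ! (i - 1)"

text \<open>Momentum attributions: mo v = (S_v, j_v, k_v).  Momentum at the end of e_i(v) at v.\<close>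
definition emom :: "(nat \<Rightarrow> nat \<times> nat \<times> nat) \<Rightarrow> nat \<Rightarrow> nat \<Rightarrow> nat" where
  "emom mo v i = (case mo v of (S,j,k) \<Rightarrow>
     if i = 1 then j else if i = 2 then S - j else if i = 3 then k else S - k)"

text \<open>Momentum of a slot at its upper end (root edges carry r).\<close>
fun smom :: "nat \<Rightarrow> (nat \<Rightarrow> nat \<times> nat \<times> nat) \<Rightarrow> slot \<Rightarrow> nat" where
  "smom r mo RootA = r"
| "smom r mo RootB = r"
| "smom r mo (Ch u i) = emom mo u i"

text \<open>Admissible attributions (normalised to (0,0,0) off the true vertices).\<close>
definition admissible :: "nat \<Rightarrow> graph \<Rightarrow> (nat \<Rightarrow> nat \<times> nat \<times> nat) set" where
  "admissible r G = {mo.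
     (\<forall>v. v \<notin> gV G \<longrightarrow> mo v = (0,0,0)) \<and>
     (\<forall>v\<in>gV G. case mo v of (S,j,k) \<Rightarrow> j \<le> S \<and> k \<le> S) \<and>
     (\<forall>v\<in>gV G. emom mo v 1 = smom r mo (gpar G v)) \<and>
     (\<forall>x\<in>lvs G True. smom r mo x = smom r mo (gdash G x)) \<and>
     (\<forall>v\<in>gV G. v < gmate G v \<longrightarrow>
        fst (mo v) = fst (mo (gmate G v)) \<and> propc (gprop G v) (mo v) (mo (gmate G v)))}"

text \<open>Amplitude A_r(G) = N^{-n} sum over admissible attributions of prod_{dashed e} p^{m(e)},
  with N = 1/(1-p); a sum of nonnegative terms, taken in ennreal.\<close>
definition amp :: "real \<Rightarrow> nat \<Rightarrow> graph \<Rightarrow> ennreal" where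
  "amp p r G = ennreal ((1 / (1 / (1 - p))) ^ card (gV G)) *
     (\<Sum>\<^sub>\<infinity>mo\<in>admissible r G. ennreal (\<Prod>x\<in>lvs G True. p ^ smom r mo x))"

definition fresh :: "graph \<Rightarrow> nat \<Rightarrow> nat \<Rightarrow> bool" where
  "fresh G v v' \<longleftrightarrow> v \<noteq> v' \<and> v \<notin> gV G \<and> v' \<notin> gV G"

definition keep_old :: "graph \<Rightarrow> graph \<Rightarrow> nat \<Rightarrow> nat \<Rightarrow> bool" where
  "keep_old G G' v v' \<longleftrightarrow>
     gV G' = insert v (insert v' (gV G)) \<and>
     (\<forall>u\<in>gV G. gmate G' u = gmate G u) \<and> gmate G' v = v' \<and> gmate G' v' = v \<and>
     (\<forall>u\<in>gV G. u < gmate G u \<longrightarrow> gprop G' u = gprop G u)"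

definition dpair :: "graph \<Rightarrow> slot \<Rightarrow> slot \<Rightarrow> bool" where
  "dpair G a b \<longleftrightarrow> gdash G a = b \<and> gdash G b = a"

text \<open>Leading propagator on the wavy edge {v,v'}: js lists, for each of the three
  edges joining v and v', the pair (index of its end at v, index of its end at v').
  The stored propagator acts from the smaller to the larger vertex.\<close>
definition lead :: "graph \<Rightarrow> nat \<Rightarrow> nat \<Rightarrow> (nat \<times> nat) list \<Rightarrow> bool" where
  "lead G v v' js \<longleftrightarrow> gprop G (min v v') < 8 \<and>
     (\<forall>(a,b)\<in>set js. if v < v' then pbij (gprop G v) a = b else pbij (gprop G v') b = a)"

definition sg :: "bool \<Rightarrow> nat \<Rightarrow> nat" where
  "sg sw a = (if sw then 7 - a else a)"

text \<open>Melonic graphs (heap-orderings ignored: the inserted vertices get arbitrary fresh names).\<close>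
inductive melonic :: "graph \<Rightarrow> bool" where
  trivial: "gV G = {} \<Longrightarrow> gdash G RootA = RootB \<Longrightarrow> gdash G RootB = RootA \<Longrightarrow> melonic G"
| insI: "melonic G \<Longrightarrow> x \<in> leaf_slots G \<Longrightarrow> gdash G x = y \<Longrightarrow> fresh G v v' \<Longrightarrow>
    keep_old G G' v v' \<Longrightarrow> (\<forall>u\<in>gV G. gpar G' u = gpar G u) \<Longrightarrow>
    gpar G' v = x \<Longrightarrow> gpar G' v' = y \<Longrightarrow>
    dpair G' (Ch v 2) (Ch v' 2) \<Longrightarrow>
    dpair G' (Ch v 3) (Ch v' (sg sw 3)) \<Longrightarrow> dpair G' (Ch v 4) (Ch v' (sg sw 4)) \<Longrightarrow>
    (\<forall>s\<in>leaf_slots G - {x, y}. gdash G' s = gdash G s) \<Longrightarrow>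
    lead G' v v' [(2,2), (3, sg sw 3), (4, sg sw 4)] \<Longrightarrow> melonic G'"
| insII: "melonic G \<Longrightarrow> z \<in> leaf_slots G \<Longrightarrow> gdash G z = z' \<Longrightarrow> fresh G v v' \<Longrightarrow>
    keep_old G G' v v' \<Longrightarrow> (\<forall>u\<in>gV G. gpar G' u = gpar G u) \<Longrightarrow>
    gpar G' v = z \<Longrightarrow> gpar G' v' = Ch v 2 \<Longrightarrow>
    dpair G' (Ch v' 2) z' \<Longrightarrow>
    dpair G' (Ch v 3) (Ch v' (sg sw 3)) \<Longrightarrow> dpair G' (Ch v 4) (Ch v' (sg sw 4)) \<Longrightarrow>
    (\<forall>s\<in>leaf_slots G - {z, z'}. gdash G' s = gdash G s) \<Longrightarrow>
    lead G' v v' [(2,1), (3, sg sw 3), (4, sg sw 4)] \<Longrightarrow> melonic G'"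
| insIII: "melonic G \<Longrightarrow> z \<in> leaf_slots G \<Longrightarrow> gdash G z = z' \<Longrightarrow> fresh G v v' \<Longrightarrow>
    a \<in> {3,4} \<Longrightarrow> c \<in> {3,4} \<Longrightarrow>
    keep_old G G' v v' \<Longrightarrow> (\<forall>u\<in>gV G. gpar G' u = gpar G u) \<Longrightarrow>
    gpar G' v = z \<Longrightarrow> gpar G' v' = Ch v a \<Longrightarrow>
    dpair G' (Ch v 2) (Ch v' c) \<Longrightarrow> dpair G' (Ch v (7 - a)) (Ch v' 2) \<Longrightarrow>
    dpair G' (Ch v' (7 - c)) z' \<Longrightarrow>
    (\<forall>s\<in>leaf_slots G - {z, z'}. gdash G' s = gdash G s) \<Longrightarrow>
    lead G' v v' [(a,1), (2,c), (7 - a, 2)] \<Longrightarrow> melonic G'"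
| insIIs: "melonic G \<Longrightarrow> z \<in> gV G \<Longrightarrow> fresh G v v' \<Longrightarrow>
    keep_old G G' v v' \<Longrightarrow> (\<forall>u\<in>gV G - {z}. gpar G' u = gpar G u) \<Longrightarrow>
    gpar G' v = gpar G z \<Longrightarrow> gpar G' v' = Ch v 2 \<Longrightarrow> gpar G' z = Ch v' 2 \<Longrightarrow>
    dpair G' (Ch v 3) (Ch v' (sg sw 3)) \<Longrightarrow> dpair G' (Ch v 4) (Ch v' (sg sw 4)) \<Longrightarrow>
    (\<forall>s\<in>leaf_slots G. gdash G' s = gdash G s) \<Longrightarrow>
    lead G' v v' [(2,1), (3, sg sw 3), (4, sg sw 4)] \<Longrightarrow> melonic G'"
| insIIIs: "melonic G \<Longrightarrow> z \<in> gV G \<Longrightarrow> fresh G v v' \<Longrightarrow>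
    a \<in> {3,4} \<Longrightarrow> c \<in> {3,4} \<Longrightarrow>
    keep_old G G' v v' \<Longrightarrow> (\<forall>u\<in>gV G - {z}. gpar G' u = gpar G u) \<Longrightarrow>
    gpar G' v = gpar G z \<Longrightarrow> gpar G' v' = Ch v a \<Longrightarrow> gpar G' z = Ch v' c \<Longrightarrow>
    dpair G' (Ch v 2) (Ch v' (7 - c)) \<Longrightarrow> dpair G' (Ch v (7 - a)) (Ch v' 2) \<Longrightarrow>
    (\<forall>s\<in>leaf_slots G. gdash G' s = gdash G s) \<Longrightarrow>
    lead G' v v' [(a,1), (2, 7 - c), (7 - a, 2)] \<Longrightarrow> melonic G'"

end

theory Submission
  imports Defs
begin

definition eps :: "real \<Rightarrow> real" where "eps s = (1 - s) / s"
definition hh :: "real \<Rightarrow> nat \<Rightarrow> real" where "hh s x = 1 / (1 + eps s * real x)^2"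
definition ff :: "real \<Rightarrow> nat \<Rightarrow> real" where "ff s x = (s^2)^x * hh s x"
definition ph :: "real \<Rightarrow> nat \<Rightarrow> real" where "ph s x = s^x / (1 + eps s * real x)"

context fixes s :: real assumes s0: "0 < s" and s1: "s < 1"
begin

lemma eps_pos: "eps s > 0" using s0 s1 by (simp add: eps_def)

lemma den_pos: "1 + eps s * real x > 0"
proof -
  have "eps s * real x \<ge> 0" using eps_pos by simp
  then show ?thesis by linarith
qed
lemma hh_pos: "hh s x > 0" using den_pos[of x] by (simp add: hh_def)
lemma hh_le1: "hh s x \<le> 1"
proof -
  have "1 \<le> (1 + eps s * real x)" using eps_pos by simp
  then have "1 \<le> (1 + eps s * real x)^2" by (simp add: one_le_power)
  then show ?thesis by (simp add: hh_def divide_le_eq)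
qed
lemma hh_mono: "m \<le> n \<Longrightarrow> hh s n \<le> hh s m"
proof -
  assume "m \<le> n"
  then have "1 + eps s * real m \<le> 1 + eps s * real n" using eps_pos by simp
  moreover have "0 < 1 + eps s * real m" using eps_pos by (simp add: add_pos_nonneg)
  ultimately have "(1 + eps s * real m)^2 \<le> (1 + eps s * real n)^2"
    by (simp add: power_mono)
  then show ?thesis unfolding hh_def using \<open>0 < 1 + eps s * real m\<close>
    by (simp add: frac_le)
qed

lemma ph_pos: "ph s x > 0" using eps_pos s0 by (simp add: ph_def add_pos_nonneg)
lemma ph_sq: "ph s x * ph s x = ff s x"
  by (simp add: ph_def ff_def hh_def power2_eq_square power_mult_distrib field_simps)
lemma ph_le1: "ph s x \<le> 1"
proof -
  have "s^x \<le> 1" using s0 s1 by (simp add: power_le_one)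
  also have "1 \<le> 1 + eps s * real x" using eps_pos by simp
  finally show ?thesis using eps_pos by (simp add: ph_def add_pos_nonneg)
qed
lemma ff_pos: "ff s x > 0" using ph_sq[of x] ph_pos[of x] by (metis mult_pos_pos)
lemma ff_le: "ff s x \<le> (s^2)^x"
  using hh_le1[of x] s0 by (simp add: ff_def mult_left_le)
lemma ff_ge: "(s^4)^x \<le> ff s x"
proof -
  have e: "1 + eps s = 1 / s" using s0 by (simp add: eps_def field_simps)
  have "1 + real x * eps s \<le> (1 + eps s)^x"
    using Bernoulli_inequality[of "eps s" x] eps_pos by simp
  then have b: "(1 + eps s * real x) * s^x \<le> 1"
    using s0 by (simp add: e power_divide field_simps mult.commute)
  have p0: "0 \<le> (1 + eps s * real x) * s^x" using eps_pos s0 by simp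
  have "((1 + eps s * real x) * s^x)^2 \<le> 1"
    using b p0 by (simp add: power_le_one)
  then have "(1 + eps s * real x)^2 * (s^x)^2 \<le> 1" by (simp add: power_mult_distrib)
  then have "(s^x)^2 \<le> hh s x" using den_pos[of x]
    by (simp add: hh_def le_divide_eq mult.commute)
  then have "(s^x)^2 * (s^2)^x \<le> hh s x * (s^2)^x" using s0 by (simp add: mult_right_mono)
  moreover have "(s^4)^x = (s^x)^2 * (s^2)^x"
    by (simp add: power_mult[symmetric] power_add[symmetric] mult.commute)
  ultimately show ?thesis by (simp add: ff_def mult.commute)
qed

lemma hh_sum_aux: "(\<Sum>k\<le>S. hh s k) \<le> 1 + 1 / eps s - (1 / eps s) / (1 + eps s * real S)"
proof (induction S)
  case 0 then show ?case using eps_pos by (simp add: hh_def)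
next
  case (Suc S)
  define e where "e = eps s"
  have e0: "e > 0" using eps_pos e_def by simp
  define a where "a = 1 + e * real S"
  have a1: "a \<ge> 1" using e0 by (simp add: a_def)
  have sa: "1 + e * real (Suc S) = a + e" by (simp add: a_def algebra_simps)
  have "hh s (Suc S) = 1 / (a + e)^2" unfolding hh_def a_def e_def by (simp add: algebra_simps)
  also have "\<dots> \<le> 1 / (a * (a + e))"
    using a1 e0 by (intro divide_left_mono) (auto simp: power2_eq_square intro!: mult_right_mono)
  also have "\<dots> = (1/e) / a - (1/e) / (a + e)"
  proof -
    have "a \<noteq> 0" "e \<noteq> 0" "a + e \<noteq> 0" using a1 e0 by auto
    then show ?thesis by (simp add: divide_simps)
  qed
  finally have h: "hh s (Suc S) \<le> (1/e) / a - (1/e) / (a + e)" .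
  have sa': "1 + e * (1 + real S) = a + e" by (simp add: a_def algebra_simps)
  have "(\<Sum>k\<le>Suc S. hh s k) = (\<Sum>k\<le>S. hh s k) + hh s (Suc S)" by simp
  also have "\<dots> \<le> 1 + 1 / e - (1 / e) / a + ((1/e) / a - (1/e) / (a + e))"
    using Suc.IH h by (simp add: e_def[symmetric] a_def[symmetric])
  also have "\<dots> = 1 + 1 / eps s - (1 / eps s) / (1 + eps s * real (Suc S))"
    using sa' by (simp add: e_def)
  finally show ?case .
qed

lemma hh_sum: "(\<Sum>k\<le>S. hh s k) \<le> 1 / (1 - s)"
proof -
  have "(1 / eps s) / (1 + eps s * real S) \<ge> 0" using eps_pos by (simp add: add_pos_nonneg)
  moreover have "1 + 1 / eps s = 1 / (1 - s)" using s0 s1 by (simp add: eps_def field_simps)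
  ultimately show ?thesis using hh_sum_aux[of S] by linarith
qed

lemma hh_pair: "k \<le> S \<Longrightarrow> hh s k * hh s (S - k) \<le> 2 * (hh s k + hh s (S - k)) * hh s S"
proof -
  assume kS: "k \<le> S"
  define e where "e = eps s"
  have e0: "e > 0" using eps_pos e_def by simp
  define a where "a = 1 + e * real k"
  define b where "b = 1 + e * real (S - k)"
  define c where "c = 1 + e * real S"
  have a1: "a \<ge> 1" "b \<ge> 1" using e0 by (auto simp: a_def b_def)
  have cab: "c \<le> a + b" "c \<ge> 1" using kS e0 by (auto simp: a_def b_def c_def of_nat_diff algebra_simps)
  have cc: "c^2 \<le> 2 * (a^2 + b^2)"
  proof -
    have "c^2 \<le> (a+b)^2" using cab a1 by (intro power_mono) auto
    also have "\<dots> \<le> 2 * (a^2 + b^2)"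
    proof -
      have "(a+b)^2 + (a-b)^2 = 2*(a^2+b^2)" by (simp add: power2_eq_square algebra_simps)
      moreover have "(a-b)^2 \<ge> 0" by simp
      ultimately show ?thesis by linarith
    qed
    finally show ?thesis .
  qed
  have "hh s k * hh s (S - k) = 1 / (a^2 * b^2)" by (simp add: hh_def a_def b_def e_def)
  also have "\<dots> \<le> 2 * (a^2 + b^2) / (a^2 * b^2 * c^2)"
    using cc a1 cab by (simp add: field_simps)
  also have "\<dots> = 2 * (1/a^2 + 1/b^2) * (1/c^2)" using a1 cab by (simp add: field_simps)
  also have "\<dots> = 2 * (hh s k + hh s (S - k)) * hh s S" by (simp add: hh_def a_def b_def c_def e_def)
  finally show ?thesis .
qed

lemma conv: "(\<Sum>k\<le>S. hh s k * hh s (S - k)) \<le> 4 / (1 - s) * hh s S"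
proof -
  have "(\<Sum>k\<le>S. hh s k * hh s (S - k)) \<le> (\<Sum>k\<le>S. 2 * (hh s k + hh s (S - k)) * hh s S)"
    by (intro sum_mono hh_pair) auto
  also have "\<dots> = 2 * hh s S * ((\<Sum>k\<le>S. hh s k) + (\<Sum>k\<le>S. hh s (S - k)))"
    by (simp add: sum_distrib_left sum_distrib_right sum.distrib algebra_simps)
  also have "(\<Sum>k\<le>S. hh s (S - k)) = (\<Sum>k\<le>S. hh s k)"
    by (rule sum.reindex_bij_witness[of _ "\<lambda>k. S - k" "\<lambda>k. S - k"]) auto
  also have "2 * hh s S * ((\<Sum>k\<le>S. hh s k) + (\<Sum>k\<le>S. hh s k)) \<le> 2 * hh s S * (1/(1-s) + 1/(1-s))"
    using hh_sum[of S] hh_pos[of S] by (intro mult_left_mono add_mono) auto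
  finally show ?thesis by (simp add: field_simps)
qed

end

lemma geom_fin:
  fixes q :: real
  assumes q0: "0 \<le> q" and q1: "q < 1" and fin: "finite A"
  shows "(\<Sum>a\<in>A. q^a) \<le> 1 / (1 - q)"
proof -
  obtain K where K: "A \<subseteq> {..<K}"
    using fin by (meson finite_nat_iff_bounded subset_eq lessThan_iff)
  have "(\<Sum>a\<in>A. q^a) \<le> (\<Sum>a<K. q^a)"
    using K q0 by (intro sum_mono2) auto
  also have "\<dots> = (1 - q^K) / (1 - q)" using q1 by (simp add: sum_gp_strict)
  also have "\<dots> \<le> 1 / (1 - q)" using q0 q1 by (simp add: divide_right_mono)
  finally show ?thesis .
qed

lemma pair_bound:
  fixes F :: "nat \<times> nat \<Rightarrow> real" and g :: "nat \<times> nat \<Rightarrow> nat \<times> nat" and q :: real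
  assumes fin: "finite G" and q0: "0 \<le> q" and q1: "q < 1"
    and inj: "inj_on g (G \<inter> D)"
    and le: "\<And>x. x \<in> G \<Longrightarrow> F x \<le> (if x \<in> D then q^(fst (g x)) * q^(snd (g x)) else 0)"
  shows "sum F G \<le> 1 / (1 - q)^2"
proof -
  let ?h = "\<lambda>y. q^(fst y) * q^(snd y)"
  have "sum F G \<le> (\<Sum>x\<in>G. if x \<in> D then ?h (g x) else 0)"
    using le by (intro sum_mono) auto
  also have "\<dots> = (\<Sum>x\<in>G \<inter> D. ?h (g x))"
    using fin by (simp add: sum.inter_restrict)
  also have "\<dots> = (\<Sum>y\<in>g ` (G \<inter> D). ?h y)"
    using inj by (simp add: sum.reindex)
  also have "\<dots> \<le> (\<Sum>y\<in>(fst ` g ` (G \<inter> D)) \<times> (snd ` g ` (G \<inter> D)). ?h y)"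
  proof (rule sum_mono2)
    show "finite (fst ` g ` (G \<inter> D) \<times> snd ` g ` (G \<inter> D))" using fin by simp
    show "g ` (G \<inter> D) \<subseteq> fst ` g ` (G \<inter> D) \<times> snd ` g ` (G \<inter> D)"
      by (rule subset_fst_snd)
    show "\<And>b. b \<in> fst ` g ` (G \<inter> D) \<times> snd ` g ` (G \<inter> D) - g ` (G \<inter> D) \<Longrightarrow> 0 \<le> q ^ fst b * q ^ snd b"
      using q0 by simp
  qed
  also have "\<dots> = (\<Sum>a\<in>fst ` g ` (G \<inter> D). q^a) * (\<Sum>b\<in>snd ` g ` (G \<inter> D). q^b)"
    by (simp add: sum_product sum.cartesian_product case_prod_unfold)
  also have "\<dots> \<le> (1 / (1 - q)) * (1 / (1 - q))"
    using fin q0 q1 by (intro mult_mono geom_fin) (auto intro: sum_nonneg)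
  also have "\<dots> = 1 / (1 - q)^2" by (simp add: power2_eq_square)
  finally show ?thesis .
qed

context fixes s :: real assumes s0: "0 < s" and s1: "s < 1"
begin

lemma spow_lt: "0 < n \<Longrightarrow> s^n < 1" using s0 s1 by (simp add: power_less_one_iff)
lemma spow_le: "s^n \<le> 1" using s0 s1 by (simp add: power_le_one)
lemma spow_pos: "0 < s^n" using s0 by simp

lemma s2_le: "1 / (1 - s^2)^2 \<le> 16 / (1 - s^4)^2"
proof -
  have a: "0 < 1 - s^2" using s0 s1 by (simp add: power_less_one_iff)
  have "1 - s^4 = (1 - s^2) * (1 + s^2)" by (simp add: algebra_simps power2_eq_square power4_eq_xxxx)
  moreover have "1 + s^2 \<le> 2" using s0 s1 by (simp add: power_le_one)
  ultimately have "1 - s^4 \<le> 2 * (1 - s^2)" using a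
    by (metis mult.commute mult_left_mono less_imp_le)
  moreover have "0 < 1 - s^4" using s0 s1 by (simp add: power_less_one_iff)
  ultimately have "(1 - s^4)^2 \<le> (2 * (1 - s^2))^2" by (intro power_mono) auto
  moreover have "(2 * (1 - s^2))^2 = 4 * (1 - s^2)^2" by (simp add: power2_eq_square algebra_simps)
  moreover have "(1 - s^2)^2 \<ge> 0" by simp
  ultimately have "(1 - s^4)^2 \<le> 16 * (1 - s^2)^2" by linarith
  then show ?thesis using a \<open>0 < 1 - s^4\<close> by (simp add: divide_simps)
qed

lemma boundC:
  assumes "finite G"
  shows "(\<Sum>x\<in>G. if snd x \<le> fst x then ff s (snd x) * ff s (fst x - snd x) else 0) \<le> 16 / (1 - s^4)^2"
proof -
  have "(\<Sum>x\<in>G. if snd x \<le> fst x then ff s (snd x) * ff s (fst x - snd x) else 0) \<le> 1 / (1 - s^2)^2"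
  proof (rule pair_bound[where g = "\<lambda>x. (snd x, fst x - snd x)" and D = "{x. snd x \<le> fst x}"])
    show "inj_on (\<lambda>x. (snd x, fst x - snd x)) (G \<inter> {x. snd x \<le> fst x})"
      by (auto simp: inj_on_def prod_eq_iff)
    show "(if snd x \<le> fst x then ff s (snd x) * ff s (fst x - snd x) else 0)
       \<le> (if x \<in> {x. snd x \<le> fst x} then (s^2)^(fst (snd x, fst x - snd x)) * (s^2)^(snd (snd x, fst x - snd x)) else 0)" for x
      using ff_le[OF s0 s1] ff_pos[OF s0 s1] by (auto intro!: mult_mono simp: less_imp_le)
  qed (use assms s0 s1 in \<open>auto simp: power_less_one_iff\<close>)
  then show ?thesis using s2_le by linarith
qed

lemma boundD:
  assumes "finite G"
  shows "(\<Sum>x\<in>G. if m \<le> fst x \<and> snd x \<le> fst x then ff s (fst x - m) * ff s (if b then snd x else fst x - snd x) else 0)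
     \<le> 16 / (1 - s^4)^2"
proof -
  have "(\<Sum>x\<in>G. if m \<le> fst x \<and> snd x \<le> fst x then ff s (fst x - m) * ff s (if b then snd x else fst x - snd x) else 0) \<le> 1 / (1 - s^2)^2"
  proof (rule pair_bound[where g = "\<lambda>x. (fst x - m, if b then snd x else fst x - snd x)" and D = "{x. m \<le> fst x \<and> snd x \<le> fst x}"])
    show "inj_on (\<lambda>x. (fst x - m, if b then snd x else fst x - snd x)) (G \<inter> {x. m \<le> fst x \<and> snd x \<le> fst x})"
      by (cases b) (auto simp: inj_on_def prod_eq_iff)
    show "(if m \<le> fst x \<and> snd x \<le> fst x then ff s (fst x - m) * ff s (if b then snd x else fst x - snd x) else 0)
       \<le> (if x \<in> {x. m \<le> fst x \<and> snd x \<le> fst x} then (s^2)^(fst (fst x - m, if b then snd x else fst x - snd x)) * (s^2)^(snd (fst x - m, if b then snd x else fst x - snd x)) else 0)" for x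
      using ff_le[OF s0 s1] ff_pos[OF s0 s1] by (auto intro!: mult_mono simp: less_imp_le)
  qed (use assms s0 s1 in \<open>auto simp: power_less_one_iff\<close>)
  then show ?thesis using s2_le by linarith
qed

lemma ffconv: "(\<Sum>k\<le>S. ff s k * ff s (S - k)) \<le> (s^2)^S * (4 / (1 - s) * hh s S)"
proof -
  have "(\<Sum>k\<le>S. ff s k * ff s (S - k)) = (\<Sum>k\<le>S. (s^2)^S * (hh s k * hh s (S - k)))"
    by (intro sum.cong refl) (simp add: ff_def power_add[symmetric] algebra_simps)
  also have "\<dots> = (s^2)^S * (\<Sum>k\<le>S. hh s k * hh s (S - k))" by (simp add: sum_distrib_left)
  also have "\<dots> \<le> (s^2)^S * (4 / (1 - s) * hh s S)"
    using conv[OF s0 s1, of S] s0 by (intro mult_left_mono) auto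
  finally show ?thesis .
qed

lemma boundB_row:
  assumes finK: "finite K"
  shows "(\<Sum>k\<in>K. if m \<le> S \<and> k \<le> S then ff s (S - m) * ff s k * ff s (S - k) / ff s m else 0)
     \<le> (if m \<le> S then 4 / (1 - s) * (s^4)^(S - m) else 0)"
proof (cases "m \<le> S")
  case False then show ?thesis by simp
next
  case True
  have pos: "\<And>k. 0 \<le> ff s k" using ff_pos[OF s0 s1] less_imp_le by blast
  have "(\<Sum>k\<in>K. if m \<le> S \<and> k \<le> S then ff s (S - m) * ff s k * ff s (S - k) / ff s m else 0)
      = (\<Sum>k\<in>K \<inter> {..S}. ff s (S - m) / ff s m * (ff s k * ff s (S - k)))"
  proof -
    have "(\<Sum>k\<in>K. if m \<le> S \<and> k \<le> S then ff s (S - m) * ff s k * ff s (S - k) / ff s m else 0)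
        = (\<Sum>k\<in>K. if k \<in> {..S} then ff s (S - m) / ff s m * (ff s k * ff s (S - k)) else 0)"
    proof (intro sum.cong refl)
      fix k assume "k \<in> K"
      have "ff s (S - m) * ff s k * ff s (S - k) / ff s m = ff s (S - m) / ff s m * (ff s k * ff s (S - k))"
        by (simp add: field_simps)
      then show "(if m \<le> S \<and> k \<le> S then ff s (S - m) * ff s k * ff s (S - k) / ff s m else 0) =
          (if k \<in> {..S} then ff s (S - m) / ff s m * (ff s k * ff s (S - k)) else 0)" using True by simp
    qed
    also have "\<dots> = (\<Sum>k\<in>K \<inter> {..S}. ff s (S - m) / ff s m * (ff s k * ff s (S - k)))"
      by (simp only: sum.inter_restrict[OF finK])
    finally show ?thesis .
  qed
  also have "\<dots> = ff s (S - m) / ff s m * (\<Sum>k\<in>K \<inter> {..S}. ff s k * ff s (S - k))"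
    by (simp add: sum_distrib_left)
  also have "\<dots> \<le> ff s (S - m) / ff s m * (\<Sum>k\<le>S. ff s k * ff s (S - k))"
    using pos by (intro mult_left_mono sum_mono2) (auto intro: divide_nonneg_nonneg)
  also have "\<dots> \<le> ff s (S - m) / ff s m * ((s^2)^S * (4 / (1 - s) * hh s m))"
  proof -
    have "(\<Sum>k\<le>S. ff s k * ff s (S - k)) \<le> (s^2)^S * (4 / (1 - s) * hh s S)" by (rule ffconv)
    also have "\<dots> \<le> (s^2)^S * (4 / (1 - s) * hh s m)"
      using hh_mono[OF s0 s1 True] s0 s1 by (intro mult_left_mono) auto
    finally show ?thesis using pos by (intro mult_left_mono) (auto intro: divide_nonneg_nonneg)
  qed
  also have "\<dots> \<le> (s^2)^(S - m) / ff s m * ((s^2)^S * (4 / (1 - s) * hh s m))"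
    using ff_le[OF s0 s1, of "S - m"] ff_pos[OF s0 s1, of m] hh_pos[OF s0 s1, of m] s0 s1
    by (intro mult_right_mono divide_right_mono) auto
  also have "\<dots> = 4 / (1 - s) * (s^4)^(S - m)"
  proof -
    have "(s^2)^S = (s^2)^(S - m) * (s^2)^m" using True by (simp add: power_add[symmetric])
    moreover have "(s^4)^(S - m) = (s^2)^(S - m) * (s^2)^(S - m)"
    proof -
      have e: "s^4 = s^2 * s^2" by (simp add: power2_eq_square power4_eq_xxxx)
      show ?thesis by (simp only: e power_mult_distrib)
    qed
    ultimately show ?thesis using hh_pos[OF s0 s1, of m] s0 s1 by (simp add: ff_def field_simps)
  qed
  finally show ?thesis using True by simp
qed

lemma boundB:
  assumes fin: "finite G"
  shows "(\<Sum>x\<in>G. if m \<le> fst x \<and> snd x \<le> fst x then ff s (fst x - m) * ff s (snd x) * ff s (fst x - snd x) / ff s m else 0)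
     \<le> 16 / (1 - s^4)^2"
proof -
  let ?F = "\<lambda>S k. if m \<le> S \<and> k \<le> S then ff s (S - m) * ff s k * ff s (S - k) / ff s m else 0"
  have pos: "\<And>S k. 0 \<le> ?F S k" using ff_pos[OF s0 s1] by (auto intro!: divide_nonneg_nonneg mult_nonneg_nonneg simp: less_imp_le)
  have "(\<Sum>x\<in>G. ?F (fst x) (snd x)) \<le> (\<Sum>x\<in>fst ` G \<times> snd ` G. ?F (fst x) (snd x))"
  proof (rule sum_mono2)
    show "finite (fst ` G \<times> snd ` G)" using fin by simp
    show "G \<subseteq> fst ` G \<times> snd ` G" by (rule subset_fst_snd)
  qed (use pos in auto)
  also have "\<dots> = (\<Sum>S\<in>fst ` G. \<Sum>k\<in>snd ` G. ?F S k)"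
    by (simp add: sum.cartesian_product case_prod_unfold)
  also have "\<dots> \<le> (\<Sum>S\<in>fst ` G. if m \<le> S then 4 / (1 - s) * (s^4)^(S - m) else 0)"
    using fin by (intro sum_mono boundB_row) auto
  also have "\<dots> = 4 / (1 - s) * (\<Sum>S\<in>fst ` G \<inter> {S. m \<le> S}. (s^4)^(S - m))"
    using fin by (simp add: sum.inter_restrict sum_distrib_left if_distrib cong: if_cong)
  finally have a0: "(\<Sum>x\<in>G. ?F (fst x) (snd x)) \<le> 4 / (1 - s) * (\<Sum>S\<in>fst ` G \<inter> {S. m \<le> S}. (s^4)^(S - m))" .
  have "(\<Sum>S\<in>fst ` G \<inter> {S. m \<le> S}. (s^4)^(S - m)) = (\<Sum>a\<in>(\<lambda>S. S - m) ` (fst ` G \<inter> {S. m \<le> S}). (s^4)^a)"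
    by (subst sum.reindex) (auto simp: inj_on_def)
  also have "\<dots> \<le> 1 / (1 - s^4)"
    using fin s0 s1 by (intro geom_fin) (auto simp: power_less_one_iff)
  finally have a1: "(\<Sum>S\<in>fst ` G \<inter> {S. m \<le> S}. (s^4)^(S - m)) \<le> 1 / (1 - s^4)" .
  have a: "(\<Sum>x\<in>G. ?F (fst x) (snd x)) \<le> 4 / (1 - s) * (1 / (1 - s^4))"
    using a0 a1 s1 by (smt (verit) mult_left_mono divide_nonneg_nonneg)
  have b: "4 / (1 - s) * (1 / (1 - s^4)) \<le> 16 / (1 - s^4)^2"
  proof -
    have p: "0 < 1 - s^4" "0 < 1 - s" using s0 s1 by (auto simp: power_less_one_iff)
    have "1 - s^4 = (1 - s) * (1 + s + s^2 + s^3)" by (simp add: algebra_simps power2_eq_square power3_eq_cube power4_eq_xxxx)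
    moreover have "1 + s + s^2 + s^3 \<le> 4" using s0 s1
      by (smt (verit) power_le_one power_less_one_iff less_imp_le)
    moreover have "(1 - s) * (1 + s + s^2 + s^3) \<le> (1 - s) * 4"
      using \<open>1 + s + s^2 + s^3 \<le> 4\<close> p by (intro mult_left_mono) auto
    ultimately have "1 - s^4 \<le> 4 * (1 - s)" by (simp add: mult.commute)
    then show ?thesis using p by (simp add: divide_simps power2_eq_square)
  qed
  show ?thesis using a b by simp
qed

end

type_synonym mom = "nat \<Rightarrow> nat \<times> nat \<times> nat"

definition restr :: "graph \<Rightarrow> mom \<Rightarrow> mom" where
  "restr G mo = (\<lambda>u. if u \<in> gV G then mo u else (0,0,0))"

definition adm2 :: "nat \<Rightarrow> graph \<Rightarrow> mom set" where
  "adm2 r G = {mo.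
     (\<forall>v. v \<notin> gV G \<longrightarrow> mo v = (0,0,0)) \<and>
     (\<forall>v\<in>gV G. case mo v of (S,j,k) \<Rightarrow> j \<le> S \<and> k \<le> S) \<and>
     (\<forall>v\<in>gV G. emom mo v 1 = smom r mo (gpar G v)) \<and>
     (\<forall>x\<in>leaf_slots G. smom r mo x = smom r mo (gdash G x)) \<and>
     (\<forall>v\<in>gV G. v < gmate G v \<longrightarrow>
        fst (mo v) = fst (mo (gmate G v)) \<and> propc (gprop G v) (mo v) (mo (gmate G v)))}"

definition wt :: "real \<Rightarrow> nat \<Rightarrow> graph \<Rightarrow> mom \<Rightarrow> real" where
  "wt s r G mo = (\<Prod>x\<in>leaf_slots G. ph s (smom r mo x))"

definition claim :: "real \<Rightarrow> graph \<Rightarrow> bool" where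
  "claim s G \<longleftrightarrow> (\<forall>r. (\<Sum>\<^sub>\<infinity>mo\<in>adm2 r G. ennreal (wt s r G mo)) \<le> ennreal ((4 / (1 - s^4))^card (gV G) * ff s r))"

definition ginv :: "graph \<Rightarrow> bool" where
  "ginv G \<longleftrightarrow> finite (gV G) \<and> (\<forall>u\<in>gV G. gpar G u \<in> slots G) \<and>
     (\<forall>x\<in>leaf_slots G. gdash G x \<in> leaf_slots G \<and> gdash G x \<noteq> x \<and> gdash G (gdash G x) = x) \<and>
     (\<forall>u\<in>gV G. gmate G u \<in> gV G)"

lemma emom_simps:
  assumes "mo u = (S, j, k)"
  shows "emom mo u 1 = j" "emom mo u 2 = S - j" "emom mo u 3 = k" "emom mo u 4 = S - k"
  using assms by (auto simp: emom_def)

lemma finite_slots: "finite (gV G) \<Longrightarrow> finite (slots G)"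
proof -
  assume f: "finite (gV G)"
  have "{Ch u i | u i. u \<in> gV G \<and> i \<in> {2,3,4}} = (\<lambda>(u,i). Ch u i) ` (gV G \<times> {2,3,4})" by auto
  then show ?thesis using f by (simp add: slots_def)
qed

lemma finite_leaf: "finite (gV G) \<Longrightarrow> finite (leaf_slots G)"
  using finite_slots by (auto simp: leaf_slots_def)

lemma leaf_sub: "leaf_slots G \<subseteq> slots G" by (auto simp: leaf_slots_def)

lemma Ch_slots: "Ch u i \<in> slots G \<longleftrightarrow> u \<in> gV G \<and> i \<in> {2,3,4}" by (auto simp: slots_def)

lemma smom_restr: "s \<in> slots G \<Longrightarrow> smom r (restr G mo) s = smom r mo s"
  by (cases s) (auto simp: slots_def restr_def emom_def)

lemma wt_pos: "0 < s \<Longrightarrow> s < 1 \<Longrightarrow> 0 \<le> wt s r G mo"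
  unfolding wt_def by (intro prod_nonneg) (auto intro: less_imp_le ph_pos)

lemma adm2_zero: "mo \<in> adm2 r G \<Longrightarrow> v \<notin> gV G \<Longrightarrow> mo v = (0,0,0)" by (auto simp: adm2_def)

lemma restr_same: "u \<in> gV G \<Longrightarrow> restr G mo u = mo u" by (simp add: restr_def)

lemma step:
  fixes \<rho> :: "nat \<Rightarrow> mom \<Rightarrow> nat \<times> nat \<Rightarrow> real"
  assumes s0: "0 < s" and s1: "s < 1"
    and IH: "claim s G" and finG: "finite (gV G)" and vv: "v \<notin> gV G" "v' \<notin> gV G" "v \<noteq> v'"
    and VG': "gV G' = insert v (insert v' (gV G))"
    and R: "\<And>r mo'. mo' \<in> adm2 r G' \<Longrightarrow> restr G mo' \<in> adm2 r G"
    and I: "\<And>r. inj_on (\<lambda>mo'. (restr G mo', (fst (mo' v), snd (snd (mo' v))))) (adm2 r G')"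
    and Wt: "\<And>r mo'. mo' \<in> adm2 r G' \<Longrightarrow>
        wt s r G' mo' \<le> wt s r G (restr G mo') * \<rho> r (restr G mo') (fst (mo' v), snd (snd (mo' v)))"
    and Rnn: "\<And>r mo x. 0 \<le> \<rho> r mo x"
    and Rb: "\<And>r mo F. finite F \<Longrightarrow> sum (\<rho> r mo) F \<le> 16 / (1 - s^4)^2"
  shows "claim s G'"
  unfolding claim_def
proof
  fix r
  define B2 where "B2 = 16 / (1 - s^4)^2"
  have s4: "0 < 1 - s^4" using s0 s1 by (simp add: power_less_one_iff)
  have B2nn: "0 \<le> B2" using s4 by (simp add: B2_def)
  let ?h = "\<lambda>mo'. (restr G mo', (fst (mo' v), snd (snd (mo' v))))"
  let ?A' = "adm2 r G'" and ?A = "adm2 r G"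
  let ?g = "\<lambda>p. wt s r G (fst p) * \<rho> r (fst p) (snd p)"
  have gnn: "\<And>p. 0 \<le> ?g p" using wt_pos[OF s0 s1] Rnn by (simp add: mult_nonneg_nonneg)
  have main: "(\<Sum>\<^sub>\<infinity>mo\<in>?A'. ennreal (wt s r G' mo)) \<le> ennreal B2 * (\<Sum>\<^sub>\<infinity>mo\<in>?A. ennreal (wt s r G mo))"
  proof (rule infsum_le_finite_sums)
    show "(\<lambda>mo. ennreal (wt s r G' mo)) summable_on ?A'" by (rule nonneg_summable_on_complete) simp
    fix F assume finF: "finite F" and FA: "F \<subseteq> ?A'"
    have injF: "inj_on ?h F" using I[of r] FA inj_on_subset by blast
    have "(\<Sum>mo\<in>F. wt s r G' mo) \<le> (\<Sum>mo\<in>F. ?g (?h mo))"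
      using Wt FA by (intro sum_mono) auto
    also have "\<dots> = (\<Sum>p\<in>?h ` F. ?g p)" using injF by (simp add: sum.reindex)
    also have "\<dots> \<le> (\<Sum>p\<in>(fst ` ?h ` F) \<times> (snd ` ?h ` F). ?g p)"
    proof (rule sum_mono2)
      show "finite ((fst ` ?h ` F) \<times> (snd ` ?h ` F))" using finF by simp
      show "?h ` F \<subseteq> (fst ` ?h ` F) \<times> (snd ` ?h ` F)" by (rule subset_fst_snd)
    qed (use gnn in auto)
    also have "\<dots> = (\<Sum>mo\<in>fst ` ?h ` F. wt s r G mo * (\<Sum>x\<in>snd ` ?h ` F. \<rho> r mo x))"
      by (simp add: sum_distrib_left sum.cartesian_product case_prod_unfold)
    also have "\<dots> \<le> (\<Sum>mo\<in>fst ` ?h ` F. wt s r G mo * B2)"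
      using Rb finF wt_pos[OF s0 s1] by (intro sum_mono mult_left_mono) (auto simp: B2_def)
    also have "\<dots> = B2 * (\<Sum>mo\<in>fst ` ?h ` F. wt s r G mo)" by (simp add: sum_distrib_left mult.commute)
    finally have le1: "(\<Sum>mo\<in>F. wt s r G' mo) \<le> B2 * (\<Sum>mo\<in>fst ` ?h ` F. wt s r G mo)" .
    have sub: "fst ` ?h ` F \<subseteq> ?A" using FA R by auto
    have "(\<Sum>mo\<in>F. ennreal (wt s r G' mo)) = ennreal (\<Sum>mo\<in>F. wt s r G' mo)"
      using wt_pos[OF s0 s1] by (simp add: sum_ennreal)
    also have "\<dots> \<le> ennreal (B2 * (\<Sum>mo\<in>fst ` ?h ` F. wt s r G mo))"
      using le1 by (rule ennreal_leI)
    also have "\<dots> = ennreal B2 * (\<Sum>mo\<in>fst ` ?h ` F. ennreal (wt s r G mo))"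
      using B2nn wt_pos[OF s0 s1] by (simp add: ennreal_mult sum_nonneg sum_ennreal)
    also have "\<dots> \<le> ennreal B2 * (\<Sum>\<^sub>\<infinity>mo\<in>?A. ennreal (wt s r G mo))"
    proof (intro mult_left_mono)
      have fin2: "finite (fst ` ?h ` F)" using finF by simp
      have "(\<Sum>mo\<in>fst ` ?h ` F. ennreal (wt s r G mo)) = (\<Sum>\<^sub>\<infinity>mo\<in>fst ` ?h ` F. ennreal (wt s r G mo))"
        using fin2 by (simp add: infsum_finite)
      also have "\<dots> \<le> (\<Sum>\<^sub>\<infinity>mo\<in>?A. ennreal (wt s r G mo))"
        by (rule infsum_mono_neutral) (use sub in \<open>auto intro: nonneg_summable_on_complete\<close>)
      finally show "(\<Sum>mo\<in>fst ` ?h ` F. ennreal (wt s r G mo)) \<le> (\<Sum>\<^sub>\<infinity>mo\<in>?A. ennreal (wt s r G mo))" .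
    qed simp
    finally show "(\<Sum>mo\<in>F. ennreal (wt s r G' mo)) \<le> ennreal B2 * (\<Sum>\<^sub>\<infinity>mo\<in>?A. ennreal (wt s r G mo))" .
  qed
  also have "\<dots> \<le> ennreal B2 * ennreal ((4 / (1 - s^4))^card (gV G) * ff s r)"
    using IH by (intro mult_left_mono) (auto simp: claim_def)
  also have "\<dots> = ennreal ((4 / (1 - s^4))^card (gV G') * ff s r)"
  proof -
    have "card (gV G') = card (gV G) + 2" using VG' vv finG by simp
    then have "(4 / (1 - s^4))^card (gV G') = B2 * (4 / (1 - s^4))^card (gV G)"
      by (simp add: B2_def power_add power2_eq_square power_divide)
    moreover have "0 \<le> (4 / (1 - s^4))^card (gV G) * ff s r"
      using s4 ff_pos[OF s0 s1, of r] by simp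
    ultimately show ?thesis using B2nn by (simp add: ennreal_mult[symmetric] mult.assoc)
  qed
  finally show "(\<Sum>\<^sub>\<infinity>mo\<in>adm2 r G'. ennreal (wt s r G' mo)) \<le> ennreal ((4 / (1 - s^4))^card (gV G') * ff s r)" .
qed


lemma emom_restr: "u \<in> gV G \<Longrightarrow> emom (restr G mo) u i = emom mo u i"
  by (simp add: emom_def restr_def)

lemma restr_adm:
  assumes gi: "ginv G" and ko: "keep_old G G' v v'" and mo': "mo' \<in> adm2 r G'"
    and P: "\<forall>u\<in>gV G. emom mo' u 1 = smom r mo' (gpar G u)"
    and D: "\<forall>x\<in>leaf_slots G. smom r mo' x = smom r mo' (gdash G x)"
  shows "restr G mo' \<in> adm2 r G"
proof -
  have VG': "gV G' = insert v (insert v' (gV G))" and gm: "\<forall>u\<in>gV G. gmate G' u = gmate G u"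
    and gp: "\<forall>u\<in>gV G. u < gmate G u \<longrightarrow> gprop G' u = gprop G u"
    using ko by (auto simp: keep_old_def)
  have par: "\<forall>u\<in>gV G. gpar G u \<in> slots G" and dl: "\<forall>x\<in>leaf_slots G. gdash G x \<in> leaf_slots G"
    and mt: "\<forall>u\<in>gV G. gmate G u \<in> gV G"
    using gi by (auto simp: ginv_def)
  have a1: "\<forall>u\<in>gV G'. case mo' u of (S,j,k) \<Rightarrow> j \<le> S \<and> k \<le> S"
    and a4: "\<forall>u\<in>gV G'. u < gmate G' u \<longrightarrow> fst (mo' u) = fst (mo' (gmate G' u)) \<and> propc (gprop G' u) (mo' u) (mo' (gmate G' u))"
    using mo' by (auto simp: adm2_def)
  show ?thesis unfolding adm2_def
  proof (intro CollectI conjI ballI allI impI)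
    fix u assume "u \<notin> gV G" then show "restr G mo' u = (0,0,0)" by (simp add: restr_def)
  next
    fix u assume u: "u \<in> gV G"
    then show "case restr G mo' u of (S,j,k) \<Rightarrow> j \<le> S \<and> k \<le> S" using a1 VG' by (simp add: restr_def)
  next
    fix u assume u: "u \<in> gV G"
    have "emom (restr G mo') u 1 = emom mo' u 1" using u by (rule emom_restr)
    also have "\<dots> = smom r mo' (gpar G u)" using P u by simp
    also have "\<dots> = smom r (restr G mo') (gpar G u)" using par u by (simp add: smom_restr)
    finally show "emom (restr G mo') u 1 = smom r (restr G mo') (gpar G u)" .
  next
    fix x assume x: "x \<in> leaf_slots G"
    have "x \<in> slots G" "gdash G x \<in> slots G" using x dl leaf_sub by blast+
    then show "smom r (restr G mo') x = smom r (restr G mo') (gdash G x)"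
      using D x by (simp add: smom_restr)
  next
    fix u assume u: "u \<in> gV G" and lt: "u < gmate G u"
    have u': "u \<in> gV G'" using u VG' by simp
    have "fst (mo' u) = fst (mo' (gmate G' u)) \<and> propc (gprop G' u) (mo' u) (mo' (gmate G' u))"
    proof -
      have "u < gmate G' u" using lt gm u by simp
      then show ?thesis using a4 u' by blast
    qed
    moreover have "gprop G' u = gprop G u" "gmate G' u = gmate G u" using gp gm u lt by auto
    ultimately have "fst (mo' u) = fst (mo' (gmate G u)) \<and> propc (gprop G u) (mo' u) (mo' (gmate G u))"
      by simp
    moreover have "restr G mo' u = mo' u" "restr G mo' (gmate G u) = mo' (gmate G u)"
      using u mt by (auto simp: restr_def)
    ultimately show "fst (restr G mo' u) = fst (restr G mo' (gmate G u))"
      "propc (gprop G u) (restr G mo' u) (restr G mo' (gmate G u))" by simp_all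
  qed
qed

lemma new_facts:
  assumes mo': "mo' \<in> adm2 r G'" and ko: "keep_old G G' v v'" and fr: "fresh G v v'"
  obtains S j k j2 k2 where "mo' v = (S,j,k)" "mo' v' = (S,j2,k2)" "j \<le> S" "k \<le> S" "j2 \<le> S" "k2 \<le> S"
    "j = smom r mo' (gpar G' v)" "j2 = smom r mo' (gpar G' v')"
proof -
  have VG': "gV G' = insert v (insert v' (gV G))" and m1: "gmate G' v = v'" and m2: "gmate G' v' = v"
    using ko by (auto simp: keep_old_def)
  have ne: "v \<noteq> v'" using fr by (simp add: fresh_def)
  obtain S j k where e1: "mo' v = (S,j,k)" by (cases "mo' v") auto
  obtain S2 j2 k2 where e2: "mo' v' = (S2,j2,k2)" by (cases "mo' v'") auto
  have a1: "\<forall>u\<in>gV G'. case mo' u of (S,j,k) \<Rightarrow> j \<le> S \<and> k \<le> S"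
    and a2: "\<forall>u\<in>gV G'. emom mo' u 1 = smom r mo' (gpar G' u)"
    and a4: "\<forall>u\<in>gV G'. u < gmate G' u \<longrightarrow> fst (mo' u) = fst (mo' (gmate G' u))"
    using mo' by (auto simp: adm2_def)
  have SS: "S = S2"
  proof (cases "v < v'")
    case True then show ?thesis using a4 VG' m1 e1 e2 by force
  next
    case False then have "v' < v" using ne by simp
    then show ?thesis using a4 VG' m2 e1 e2 by force
  qed
  have "j \<le> S" "k \<le> S" using a1 e1 VG' by force+
  moreover have "j2 \<le> S" "k2 \<le> S" using a1 e2 VG' SS by force+
  moreover have "j = smom r mo' (gpar G' v)" using a2 VG' e1 by (force simp: emom_def)
  moreover have "j2 = smom r mo' (gpar G' v')" using a2 VG' e2 by (force simp: emom_def)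
  ultimately show ?thesis using that e1 e2 SS by blast
qed

lemma slotsG': "keep_old G G' v v' \<Longrightarrow> slots G' = slots G \<union> {Ch v 2, Ch v 3, Ch v 4, Ch v' 2, Ch v' 3, Ch v' 4}"
  by (auto simp: slots_def keep_old_def)

lemma new_notin: "fresh G v v' \<Longrightarrow> {Ch v 2, Ch v 3, Ch v 4, Ch v' 2, Ch v' 3, Ch v' 4} \<inter> slots G = {}"
  by (auto simp: slots_def fresh_def)

lemma leaf_G':
  assumes "slots G' = slots G \<union> NS" "NS \<inter> slots G = {}" "gpar G' ` gV G' = gpar G ` gV G \<union> X"
    "gpar G ` gV G \<subseteq> slots G"
  shows "leaf_slots G' = (leaf_slots G - X) \<union> (NS - X)"
  using assms by (auto simp: leaf_slots_def)

lemma wt_split: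
  assumes s0: "0 < s" and s1: "s < 1" and fin: "finite (gV G)"
    and L': "leaf_slots G' = (leaf_slots G - R) \<union> N" and RL: "R \<subseteq> leaf_slots G"
    and NL: "N \<inter> slots G = {}" and finN: "finite N"
  shows "wt s r G' mo' * (\<Prod>x\<in>R. ph s (smom r mo' x)) = wt s r G (restr G mo') * (\<Prod>x\<in>N. ph s (smom r mo' x))"
proof -
  let ?g = "\<lambda>x. ph s (smom r mo' x)"
  have finL: "finite (leaf_slots G)" using fin by (rule finite_leaf)
  have NL': "N \<inter> (leaf_slots G - R) = {}" using NL leaf_sub by blast
  have "wt s r G' mo' = prod ?g (leaf_slots G - R) * prod ?g N"
    unfolding wt_def L' using finL finN NL' by (subst prod.union_disjoint) auto
  moreover have "wt s r G (restr G mo') = prod ?g (leaf_slots G)"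
    unfolding wt_def by (intro prod.cong refl) (simp add: smom_restr[OF subsetD[OF leaf_sub]])
  moreover have "prod ?g (leaf_slots G) = prod ?g (leaf_slots G - R) * prod ?g R"
    using finL RL by (metis prod.subset_diff mult.commute)
  ultimately show ?thesis by (simp add: ac_simps)
qed

lemma inj_gen:
  assumes VG': "gV G' = insert v (insert v' (gV G))"
    and zero: "\<And>mo' u. mo' \<in> A \<Longrightarrow> u \<notin> gV G' \<Longrightarrow> mo' u = (0,0,0)"
    and F1: "\<And>mo'. mo' \<in> A \<Longrightarrow> mo' v = \<Phi> (restr G mo') (fst (mo' v), snd (snd (mo' v)))"
    and F2: "\<And>mo'. mo' \<in> A \<Longrightarrow> mo' v' = \<Psi> (restr G mo') (fst (mo' v), snd (snd (mo' v)))"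
  shows "inj_on (\<lambda>mo'. (restr G mo', (fst (mo' v), snd (snd (mo' v))))) A"
proof (rule inj_onI)
  fix a b assume a: "a \<in> A" and b: "b \<in> A"
    and eq: "(restr G a, (fst (a v), snd (snd (a v)))) = (restr G b, (fst (b v), snd (snd (b v))))"
  show "a = b"
  proof
    fix u
    show "a u = b u"
    proof (cases "u \<in> gV G")
      case True then show ?thesis using eq by (metis Pair_inject restr_same)
    next
      case False
      show ?thesis
      proof (cases "u = v")
        case True then show ?thesis using F1[OF a] F1[OF b] eq by simp
      next
        case nv: False
        show ?thesis
        proof (cases "u = v'")
          case True then show ?thesis using F2[OF a] F2[OF b] eq by simp
        next
          case False then show ?thesis using zero[OF a] zero[OF b] nv \<open>u \<notin> gV G\<close> VG' by simp
        qed
      qed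
    qed
  qed
qed


lemma leaf_inv_gen:
  assumes L': "leaf_slots G' = (leaf_slots G - R) \<union> N"
    and old: "\<forall>t\<in>leaf_slots G - E. gdash G' t = gdash G t"
    and gi: "\<forall>t\<in>leaf_slots G. gdash G t \<in> leaf_slots G \<and> gdash G t \<noteq> t \<and> gdash G (gdash G t) = t"
    and Ec: "\<forall>t\<in>E. gdash G t \<in> E" and RE: "R \<subseteq> E" and EL: "E \<subseteq> leaf_slots G"
    and np: "\<forall>t\<in>N \<union> (E - R). gdash G' t \<in> N \<union> (E - R) \<and> gdash G' t \<noteq> t \<and> gdash G' (gdash G' t) = t"
  shows "\<forall>t\<in>leaf_slots G'. gdash G' t \<in> leaf_slots G' \<and> gdash G' t \<noteq> t \<and> gdash G' (gdash G' t) = t"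
proof
  fix t assume t: "t \<in> leaf_slots G'"
  have sub: "N \<union> (E - R) \<subseteq> leaf_slots G'" using L' EL by auto
  show "gdash G' t \<in> leaf_slots G' \<and> gdash G' t \<noteq> t \<and> gdash G' (gdash G' t) = t"
  proof (cases "t \<in> N \<union> (E - R)")
    case True then show ?thesis using np sub by blast
  next
    case False
    then have tL: "t \<in> leaf_slots G - E" using t L' by auto
    define t2 where "t2 = gdash G t"
    have t2L: "t2 \<in> leaf_slots G" "t2 \<noteq> t" "gdash G t2 = t" using gi tL by (auto simp: t2_def)
    have "t2 \<notin> E"
    proof
      assume "t2 \<in> E" then have "gdash G t2 \<in> E" using Ec by blast
      then show False using t2L tL by simp
    qed
    then have "t2 \<in> leaf_slots G - E" using t2L by simp
    then have "t2 \<in> leaf_slots G'" "gdash G' t2 = t" using L' RE old t2L by auto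
    moreover have "gdash G' t = t2" using old tL t2_def by simp
    ultimately show ?thesis using t2L by simp
  qed
qed

lemma ginv_trivial: "gV G = {} \<Longrightarrow> gdash G RootA = RootB \<Longrightarrow> gdash G RootB = RootA \<Longrightarrow> ginv G"
  by (auto simp: ginv_def leaf_slots_def slots_def)

lemma claim_trivial:
  assumes s0: "0 < s" and s1: "s < 1" and V: "gV G = {}" and d1: "gdash G RootA = RootB" and d2: "gdash G RootB = RootA"
  shows "claim s G"
  unfolding claim_def
proof
  fix r
  have L: "leaf_slots G = {RootA, RootB}" using V by (auto simp: leaf_slots_def slots_def)
  let ?z = "\<lambda>u::nat. (0::nat, 0::nat, 0::nat)"
  have sub: "adm2 r G \<subseteq> {?z}" using V by (auto simp: adm2_def)
  have w: "wt s r G ?z = ff s r" using L ph_sq[OF s0 s1] by (simp add: wt_def)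
  have "(\<Sum>\<^sub>\<infinity>mo\<in>adm2 r G. ennreal (wt s r G mo)) \<le> (\<Sum>\<^sub>\<infinity>mo\<in>{?z}. ennreal (wt s r G mo))"
    by (rule infsum_mono_neutral) (use sub in \<open>auto intro: nonneg_summable_on_complete\<close>)
  also have "\<dots> = ennreal (ff s r)" using w by simp
  finally show "(\<Sum>\<^sub>\<infinity>mo\<in>adm2 r G. ennreal (wt s r G mo)) \<le> ennreal ((4 / (1 - s^4))^card (gV G) * ff s r)"
    using V by simp
qed


lemma case_I:
  assumes gi: "ginv G"
    and xL: "x \<in> leaf_slots G" and xy: "gdash G x = y" and fr: "fresh G v v'" and ko: "keep_old G G' v v'"
    and par: "\<forall>u\<in>gV G. gpar G' u = gpar G u" and pv: "gpar G' v = x" and pv': "gpar G' v' = y"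
    and d2: "dpair G' (Ch v 2) (Ch v' 2)" and d3: "dpair G' (Ch v 3) (Ch v' (sg sw 3))"
    and d4: "dpair G' (Ch v 4) (Ch v' (sg sw 4))"
    and old: "\<forall>t\<in>leaf_slots G - {x, y}. gdash G' t = gdash G t"
  shows "ginv G' \<and> (\<forall>s. 0 < s \<longrightarrow> s < 1 \<longrightarrow> claim s G \<longrightarrow> claim s G')"
proof -
  have finG: "finite (gV G)" and parS: "gpar G ` gV G \<subseteq> slots G" using gi by (auto simp: ginv_def)
  have yL: "y \<in> leaf_slots G" and xny: "x \<noteq> y" and yx: "gdash G y = x"
    using gi xL xy by (auto simp: ginv_def)
  have VG': "gV G' = insert v (insert v' (gV G))" using ko by (simp add: keep_old_def)
  have vv: "v \<notin> gV G" "v' \<notin> gV G" "v \<noteq> v'" using fr by (auto simp: fresh_def)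
  define NS where "NS = {Ch v 2, Ch v 3, Ch v 4, Ch v' 2, Ch v' 3, Ch v' 4}"
  have sG': "slots G' = slots G \<union> NS" using slotsG'[OF ko] by (simp add: NS_def)
  have NSd: "NS \<inter> slots G = {}" using new_notin[OF fr] by (simp add: NS_def)
  have xyS: "x \<in> slots G" "y \<in> slots G" using xL yL leaf_sub by blast+
  have img: "gpar G' ` gV G' = gpar G ` gV G \<union> {x, y}"
  proof -
    have "gpar G' ` gV G = gpar G ` gV G" using par by (intro image_cong) auto
    then show ?thesis using VG' pv pv' by auto
  qed
  have L': "leaf_slots G' = (leaf_slots G - {x, y}) \<union> NS"
  proof -
    have "leaf_slots G' = (leaf_slots G - {x, y}) \<union> (NS - {x, y})"
      by (rule leaf_G'[OF sG' NSd img parS])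
    moreover have "NS - {x, y} = NS" using NSd xyS by auto
    ultimately show ?thesis by simp
  qed
  have NSL: "NS \<subseteq> leaf_slots G'" using L' by auto
  have gd: "gdash G' (Ch v 2) = Ch v' 2" "gdash G' (Ch v 3) = Ch v' (sg sw 3)" "gdash G' (Ch v 4) = Ch v' (sg sw 4)"
    using d2 d3 d4 by (auto simp: dpair_def)
  have key: "\<exists>S j k k2. mo' v = (S,j,k) \<and> mo' v' = (S,j,k2) \<and> j \<le> S \<and> k \<le> S \<and> k2 \<le> S \<and>
      j = smom r mo' x \<and> j = smom r mo' y \<and> k2 = (if sw then S - k else k) \<and> emom mo' v' 4 = (if sw then k else S - k)"
    if mo': "mo' \<in> adm2 r G'" for r mo'
  proof -
    obtain S j k j2 k2 where e1: "mo' v = (S,j,k)" and e2: "mo' v' = (S,j2,k2)" and b: "j \<le> S" "k \<le> S" "j2 \<le> S" "k2 \<le> S"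
      and jj: "j = smom r mo' (gpar G' v)" and jj2: "j2 = smom r mo' (gpar G' v')"
      using new_facts[OF mo' ko fr] by metis
    have dd: "\<forall>t\<in>leaf_slots G'. smom r mo' t = smom r mo' (gdash G' t)" using mo' by (simp add: adm2_def)
    have "smom r mo' (Ch v 2) = smom r mo' (Ch v' 2)" using dd NSL gd by (auto simp: NS_def)
    then have "S - j = S - j2" using e1 e2 by (simp add: emom_def)
    then have j2: "j2 = j" using b by simp
    have h3: "smom r mo' (Ch v 3) = smom r mo' (Ch v' (sg sw 3))" using dd NSL gd by (auto simp: NS_def)
    have h4: "smom r mo' (Ch v 4) = smom r mo' (Ch v' (sg sw 4))" using dd NSL gd by (auto simp: NS_def)
    have k2: "k2 = (if sw then S - k else k)" and e4: "emom mo' v' 4 = (if sw then k else S - k)"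
      using h3 h4 e1 e2 b by (cases sw; simp add: sg_def emom_def)+
    show ?thesis using e1 e2 b jj jj2 j2 k2 e4 pv pv' by auto
  qed
  have gi': "ginv G'"
  proof -
    have giL: "\<forall>t\<in>leaf_slots G. gdash G t \<in> leaf_slots G \<and> gdash G t \<noteq> t \<and> gdash G (gdash G t) = t"
      using gi by (simp add: ginv_def)
    have old': "\<forall>t\<in>leaf_slots G - {x, y}. gdash G' t = gdash G t" using old by simp
    have "\<forall>t\<in>leaf_slots G'. gdash G' t \<in> leaf_slots G' \<and> gdash G' t \<noteq> t \<and> gdash G' (gdash G' t) = t"
    proof (rule leaf_inv_gen[OF L' old' giL])
      show "\<forall>t\<in>{x, y}. gdash G t \<in> {x, y}" using xy yx by auto
      show "{x, y} \<subseteq> {x, y}" by auto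
      show "{x, y} \<subseteq> leaf_slots G" using xL yL by simp
      show "\<forall>t\<in>NS \<union> ({x, y} - {x, y}). gdash G' t \<in> NS \<union> ({x, y} - {x, y}) \<and> gdash G' t \<noteq> t \<and> gdash G' (gdash G' t) = t"
        using d2 d3 d4 vv by (cases sw) (auto simp: NS_def dpair_def sg_def)
    qed
    moreover have "\<forall>u\<in>gV G'. gpar G' u \<in> slots G'" using VG' par pv pv' xyS gi sG' by (auto simp: ginv_def)
    moreover have "\<forall>u\<in>gV G'. gmate G' u \<in> gV G'" using ko gi VG' by (auto simp: keep_old_def ginv_def)
    ultimately show ?thesis using finG VG' by (simp add: ginv_def)
  qed
  moreover have "claim s G'" if s0: "0 < s" and s1: "s < 1" and IH: "claim s G" for s
  proof -
  define \<rho> where "\<rho> r mo p = (if smom r mo x \<le> fst p \<and> snd p \<le> fst p then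
      ff s (fst p - smom r mo x) * ff s (snd p) * ff s (fst p - snd p) / ff s (smom r mo x) else 0)"
    for r mo and p :: "nat \<times> nat"
  show ?thesis
  proof (rule step[OF s0 s1 IH finG vv VG', where \<rho> = \<rho>])
    fix r mo' assume mo': "mo' \<in> adm2 r G'"
    obtain S j k k2 where e1: "mo' v = (S,j,k)" and e2: "mo' v' = (S,j,k2)" and b: "j \<le> S" "k \<le> S" "k2 \<le> S"
      and jx: "j = smom r mo' x" and jy: "j = smom r mo' y"
      using key[OF mo'] by blast
    have dd: "\<forall>t\<in>leaf_slots G'. smom r mo' t = smom r mo' (gdash G' t)" 
      and pp: "\<forall>u\<in>gV G'. emom mo' u 1 = smom r mo' (gpar G' u)" using mo' by (auto simp: adm2_def)
    show "restr G mo' \<in> adm2 r G"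
    proof (rule restr_adm[OF gi ko mo'])
      show "\<forall>u\<in>gV G. emom mo' u 1 = smom r mo' (gpar G u)" using pp par VG' by auto
      show "\<forall>t\<in>leaf_slots G. smom r mo' t = smom r mo' (gdash G t)"
      proof
        fix t assume t: "t \<in> leaf_slots G"
        show "smom r mo' t = smom r mo' (gdash G t)"
        proof (cases "t = x \<or> t = y")
          case True then show ?thesis using jx jy xy yx by auto
        next
          case False
          then have "t \<in> leaf_slots G'" "gdash G' t = gdash G t" using t L' old by auto
          then show ?thesis using dd by metis
        qed
      qed
    qed
  next
    fix r
    have hv: "mo' v = (fst (mo' v), smom r (restr G mo') x, snd (snd (mo' v))) \<and>
        mo' v' = (fst (mo' v), smom r (restr G mo') x, if sw then fst (mo' v) - snd (snd (mo' v)) else snd (snd (mo' v)))"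
      if mo': "mo' \<in> adm2 r G'" for mo'
    proof -
      obtain S j k k2 where e1: "mo' v = (S,j,k)" and e2: "mo' v' = (S,j,k2)"
        and jx: "j = smom r mo' x" and k2: "k2 = (if sw then S - k else k)"
        using key[OF mo'] by blast
      have "smom r (restr G mo') x = smom r mo' x" using xyS by (simp add: smom_restr)
      then show ?thesis using e1 e2 jx k2 by auto
    qed
    show "inj_on (\<lambda>mo'. (restr G mo', fst (mo' v), snd (snd (mo' v)))) (adm2 r G')"
      apply (rule inj_gen[OF VG', where \<Phi> = "\<lambda>mo p. (fst p, smom r mo x, snd p)"
          and \<Psi> = "\<lambda>mo p. (fst p, smom r mo x, if sw then fst p - snd p else snd p)"])
        apply (simp add: adm2_def)
       apply (simp only: fst_conv snd_conv)
       apply (drule hv, erule conjunct1)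
      apply (simp only: fst_conv snd_conv)
      apply (drule hv, erule conjunct2)
      done
  next
    fix r mo' assume mo': "mo' \<in> adm2 r G'"
    obtain S j k k2 where e1: "mo' v = (S,j,k)" and e2: "mo' v' = (S,j,k2)" and b: "j \<le> S" "k \<le> S"
      and jx: "j = smom r mo' x" and jy: "j = smom r mo' y" and k2: "k2 = (if sw then S - k else k)"
      and e4: "emom mo' v' 4 = (if sw then k else S - k)"
      using key[OF mo'] by blast
    have ws: "wt s r G' mo' * (\<Prod>t\<in>{x,y}. ph s (smom r mo' t)) = wt s r G (restr G mo') * (\<Prod>t\<in>NS. ph s (smom r mo' t))"
      by (rule wt_split[OF s0 s1 finG L']) (use xL yL NSd in \<open>auto simp: NS_def\<close>)
    have pR: "(\<Prod>t\<in>{x,y}. ph s (smom r mo' t)) = ff s j" using xny jx jy by (simp add: ph_sq[OF s0 s1])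
    have pN: "(\<Prod>t\<in>NS. ph s (smom r mo' t)) = ff s (S - j) * ff s k * ff s (S - k)"
    proof -
      have "(\<Prod>t\<in>NS. ph s (smom r mo' t)) = ph s (S - j) * ph s k * ph s (S - k) * ph s (S - j) * ph s (emom mo' v' 3) * ph s (emom mo' v' 4)"
        using vv e1 e2 by (simp add: NS_def emom_def)
      also have "\<dots> = ph s (S - j) * ph s k * ph s (S - k) * ph s (S - j) * ph s k * ph s (S - k)"
        using e2 k2 e4 by (cases sw) (auto simp: emom_def)
      also have "\<dots> = (ph s (S - j) * ph s (S - j)) * (ph s k * ph s k) * (ph s (S - k) * ph s (S - k))"
        by (simp add: ac_simps)
      finally show ?thesis by (simp add: ph_sq[OF s0 s1])
    qed
    have m: "smom r (restr G mo') x = j" using xyS jx by (simp add: smom_restr)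
    have "wt s r G' mo' = wt s r G (restr G mo') * (ff s (S - j) * ff s k * ff s (S - k) / ff s j)"
      using ws pR pN ff_pos[OF s0 s1, of j] by (simp add: field_simps)
    also have "\<dots> = wt s r G (restr G mo') * \<rho> r (restr G mo') (fst (mo' v), snd (snd (mo' v)))"
      using m b e1 by (simp add: \<rho>_def)
    finally show "wt s r G' mo' \<le> wt s r G (restr G mo') * \<rho> r (restr G mo') (fst (mo' v), snd (snd (mo' v)))"
      by simp
  next
    show "0 \<le> \<rho> r mo p" for r mo p
      using ff_pos[OF s0 s1] by (auto simp: \<rho>_def less_imp_le)
  next
    fix r mo and F :: "(nat \<times> nat) set" assume "finite F"
    then show "sum (\<rho> r mo) F \<le> 16 / (1 - s^4)^2"
      using boundB[OF s0 s1, of F "smom r mo x"] by (simp add: \<rho>_def)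
  qed
  qed
  ultimately show ?thesis by blast
qed


lemma case_II:
  assumes gi: "ginv G"
    and zL: "z \<in> leaf_slots G" and zz: "gdash G z = z'" and fr: "fresh G v v'" and ko: "keep_old G G' v v'"
    and par: "\<forall>u\<in>gV G. gpar G' u = gpar G u" and pv: "gpar G' v = z" and pv': "gpar G' v' = Ch v 2"
    and d2: "dpair G' (Ch v' 2) z'" and d3: "dpair G' (Ch v 3) (Ch v' (sg sw 3))"
    and d4: "dpair G' (Ch v 4) (Ch v' (sg sw 4))"
    and old: "\<forall>t\<in>leaf_slots G - {z, z'}. gdash G' t = gdash G t"
  shows "ginv G' \<and> (\<forall>s. 0 < s \<longrightarrow> s < 1 \<longrightarrow> claim s G \<longrightarrow> claim s G')"
proof -
  have finG: "finite (gV G)" and parS: "gpar G ` gV G \<subseteq> slots G" using gi by (auto simp: ginv_def)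
  have z'L: "z' \<in> leaf_slots G" and znz: "z \<noteq> z'" and z'z: "gdash G z' = z"
    using gi zL zz by (auto simp: ginv_def)
  have VG': "gV G' = insert v (insert v' (gV G))" using ko by (simp add: keep_old_def)
  have vv: "v \<notin> gV G" "v' \<notin> gV G" "v \<noteq> v'" using fr by (auto simp: fresh_def)
  define NS where "NS = {Ch v 2, Ch v 3, Ch v 4, Ch v' 2, Ch v' 3, Ch v' 4}"
  define N where "N = {Ch v 3, Ch v 4, Ch v' 2, Ch v' 3, Ch v' 4}"
  have sG': "slots G' = slots G \<union> NS" using slotsG'[OF ko] by (simp add: NS_def)
  have NSd: "NS \<inter> slots G = {}" using new_notin[OF fr] by (simp add: NS_def)
  have zS: "z \<in> slots G" "z' \<in> slots G" using zL z'L leaf_sub by blast+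
  have img: "gpar G' ` gV G' = gpar G ` gV G \<union> {z, Ch v 2}"
  proof -
    have "gpar G' ` gV G = gpar G ` gV G" using par by (intro image_cong) auto
    then show ?thesis using VG' pv pv' by auto
  qed
  have L': "leaf_slots G' = (leaf_slots G - {z}) \<union> N"
  proof -
    have "leaf_slots G' = (leaf_slots G - {z, Ch v 2}) \<union> (NS - {z, Ch v 2})"
      by (rule leaf_G'[OF sG' NSd img parS])
    moreover have "NS - {z, Ch v 2} = N" using NSd zS vv by (auto simp: NS_def N_def)
    moreover have "leaf_slots G - {z, Ch v 2} = leaf_slots G - {z}" using NSd leaf_sub by (auto simp: NS_def)
    ultimately show ?thesis by simp
  qed
  have NL: "N \<subseteq> leaf_slots G'" using L' by auto
  have z'L': "z' \<in> leaf_slots G'" using L' z'L znz by auto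
  have gd: "gdash G' z' = Ch v' 2" "gdash G' (Ch v 3) = Ch v' (sg sw 3)" "gdash G' (Ch v 4) = Ch v' (sg sw 4)"
    using d2 d3 d4 by (auto simp: dpair_def)
  have key: "\<exists>S j k k2. mo' v = (S,j,k) \<and> mo' v' = (S,S - j,k2) \<and> j \<le> S \<and> k \<le> S \<and> k2 \<le> S \<and>
      j = smom r mo' z \<and> j = smom r mo' z' \<and> k2 = (if sw then S - k else k) \<and> emom mo' v' 4 = (if sw then k else S - k)"
    if mo': "mo' \<in> adm2 r G'" for r mo'
  proof -
    obtain S j k j2 k2 where e1: "mo' v = (S,j,k)" and e2: "mo' v' = (S,j2,k2)" and b: "j \<le> S" "k \<le> S" "j2 \<le> S" "k2 \<le> S"
      and jj: "j = smom r mo' (gpar G' v)" and jj2: "j2 = smom r mo' (gpar G' v')"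
      using new_facts[OF mo' ko fr] by metis
    have dd: "\<forall>t\<in>leaf_slots G'. smom r mo' t = smom r mo' (gdash G' t)" using mo' by (simp add: adm2_def)
    have j2: "j2 = S - j" using jj2 pv' e1 by (simp add: emom_def)
    have "smom r mo' z' = smom r mo' (Ch v' 2)" using dd z'L' gd by auto
    then have jz': "smom r mo' z' = j" using e2 j2 b by (simp add: emom_def)
    have h3: "smom r mo' (Ch v 3) = smom r mo' (Ch v' (sg sw 3))" using dd NL gd by (auto simp: N_def)
    have h4: "smom r mo' (Ch v 4) = smom r mo' (Ch v' (sg sw 4))" using dd NL gd by (auto simp: N_def)
    have k2: "k2 = (if sw then S - k else k)" and e4: "emom mo' v' 4 = (if sw then k else S - k)"
      using h3 h4 e1 e2 b by (cases sw; simp add: sg_def emom_def)+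
    show ?thesis using e1 e2 b jj j2 k2 e4 pv jz' by auto
  qed
  have gi': "ginv G'"
  proof -
    have giL: "\<forall>t\<in>leaf_slots G. gdash G t \<in> leaf_slots G \<and> gdash G t \<noteq> t \<and> gdash G (gdash G t) = t"
      using gi by (simp add: ginv_def)
    have old': "\<forall>t\<in>leaf_slots G - {z, z'}. gdash G' t = gdash G t" using old by simp
    have "\<forall>t\<in>leaf_slots G'. gdash G' t \<in> leaf_slots G' \<and> gdash G' t \<noteq> t \<and> gdash G' (gdash G' t) = t"
    proof (rule leaf_inv_gen[OF L' old' giL])
      show "\<forall>t\<in>{z, z'}. gdash G t \<in> {z, z'}" using zz z'z by auto
      show "{z} \<subseteq> {z, z'}" by auto
      show "{z, z'} \<subseteq> leaf_slots G" using zL z'L by simp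
      show "\<forall>t\<in>N \<union> ({z, z'} - {z}). gdash G' t \<in> N \<union> ({z, z'} - {z}) \<and> gdash G' t \<noteq> t \<and> gdash G' (gdash G' t) = t"
        using d2 d3 d4 vv znz zS NSd by (cases sw) (auto simp: N_def NS_def dpair_def sg_def)
    qed
    moreover have "\<forall>u\<in>gV G'. gpar G' u \<in> slots G'" using VG' par pv pv' zS gi sG' by (auto simp: ginv_def NS_def)
    moreover have "\<forall>u\<in>gV G'. gmate G' u \<in> gV G'" using ko gi VG' by (auto simp: keep_old_def ginv_def)
    ultimately show ?thesis using finG VG' by (simp add: ginv_def)
  qed
  moreover have "claim s G'" if s0: "0 < s" and s1: "s < 1" and IH: "claim s G" for s
  proof -
  define \<rho> where "\<rho> r mo p = (if snd p \<le> fst p then ff s (snd p) * ff s (fst p - snd p) else 0)"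
    for r :: nat and mo :: mom and p :: "nat \<times> nat"
  show ?thesis
  proof (rule step[OF s0 s1 IH finG vv VG', where \<rho> = \<rho>])
    fix r mo' assume mo': "mo' \<in> adm2 r G'"
    obtain S j k k2 where e1: "mo' v = (S,j,k)" and jz: "j = smom r mo' z" and jz': "j = smom r mo' z'"
      using key[OF mo'] by blast
    have dd: "\<forall>t\<in>leaf_slots G'. smom r mo' t = smom r mo' (gdash G' t)" 
      and pp: "\<forall>u\<in>gV G'. emom mo' u 1 = smom r mo' (gpar G' u)" using mo' by (auto simp: adm2_def)
    show "restr G mo' \<in> adm2 r G"
    proof (rule restr_adm[OF gi ko mo'])
      show "\<forall>u\<in>gV G. emom mo' u 1 = smom r mo' (gpar G u)" using pp par VG' by auto
      show "\<forall>t\<in>leaf_slots G. smom r mo' t = smom r mo' (gdash G t)"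
      proof
        fix t assume t: "t \<in> leaf_slots G"
        show "smom r mo' t = smom r mo' (gdash G t)"
        proof (cases "t = z \<or> t = z'")
          case True then show ?thesis using jz jz' zz z'z by auto
        next
          case False
          then have "t \<in> leaf_slots G'" "gdash G' t = gdash G t" using t L' old by auto
          then show ?thesis using dd by metis
        qed
      qed
    qed
  next
    fix r
    have hv: "mo' v = (fst (mo' v), smom r (restr G mo') z, snd (snd (mo' v))) \<and>
        mo' v' = (fst (mo' v), fst (mo' v) - smom r (restr G mo') z, if sw then fst (mo' v) - snd (snd (mo' v)) else snd (snd (mo' v)))"
      if mo': "mo' \<in> adm2 r G'" for mo'
    proof -
      obtain S j k k2 where e1: "mo' v = (S,j,k)" and e2: "mo' v' = (S,S - j,k2)"
        and jx: "j = smom r mo' z" and k2: "k2 = (if sw then S - k else k)"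
        using key[OF mo'] by blast
      have "smom r (restr G mo') z = smom r mo' z" using zS by (simp add: smom_restr)
      then show ?thesis using e1 e2 jx k2 by auto
    qed
    show "inj_on (\<lambda>mo'. (restr G mo', fst (mo' v), snd (snd (mo' v)))) (adm2 r G')"
      apply (rule inj_gen[OF VG', where \<Phi> = "\<lambda>mo p. (fst p, smom r mo z, snd p)"
          and \<Psi> = "\<lambda>mo p. (fst p, fst p - smom r mo z, if sw then fst p - snd p else snd p)"])
        apply (simp add: adm2_def)
       apply (simp only: fst_conv snd_conv)
       apply (drule hv, erule conjunct1)
      apply (simp only: fst_conv snd_conv)
      apply (drule hv, erule conjunct2)
      done
  next
    fix r mo' assume mo': "mo' \<in> adm2 r G'"
    obtain S j k k2 where e1: "mo' v = (S,j,k)" and e2: "mo' v' = (S,S - j,k2)" and b: "j \<le> S" "k \<le> S"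
      and jz: "j = smom r mo' z" and k2: "k2 = (if sw then S - k else k)"
      and e4: "emom mo' v' 4 = (if sw then k else S - k)"
      using key[OF mo'] by blast
    have ws: "wt s r G' mo' * (\<Prod>t\<in>{z}. ph s (smom r mo' t)) = wt s r G (restr G mo') * (\<Prod>t\<in>N. ph s (smom r mo' t))"
      by (rule wt_split[OF s0 s1 finG L']) (use zL NSd in \<open>auto simp: NS_def N_def\<close>)
    have pR: "(\<Prod>t\<in>{z}. ph s (smom r mo' t)) = ph s j" using jz by simp
    have pN: "(\<Prod>t\<in>N. ph s (smom r mo' t)) = ph s j * (ff s k * ff s (S - k))"
    proof -
      have "(\<Prod>t\<in>N. ph s (smom r mo' t)) = ph s k * ph s (S - k) * ph s (S - (S - j)) * ph s (emom mo' v' 3) * ph s (emom mo' v' 4)"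
        using vv e1 e2 by (simp add: N_def emom_def)
      also have "\<dots> = ph s k * ph s (S - k) * ph s j * ph s k * ph s (S - k)"
        using e2 k2 e4 b by (cases sw) (auto simp: emom_def)
      also have "\<dots> = ph s j * ((ph s k * ph s k) * (ph s (S - k) * ph s (S - k)))"
        by (simp add: ac_simps)
      finally show ?thesis by (simp add: ph_sq[OF s0 s1])
    qed
    have "wt s r G' mo' = wt s r G (restr G mo') * (ff s k * ff s (S - k))"
      using ws pR pN ph_pos[OF s0 s1, of j] by (simp add: field_simps)
    also have "\<dots> = wt s r G (restr G mo') * \<rho> r (restr G mo') (fst (mo' v), snd (snd (mo' v)))"
      using b e1 by (simp add: \<rho>_def)
    finally show "wt s r G' mo' \<le> wt s r G (restr G mo') * \<rho> r (restr G mo') (fst (mo' v), snd (snd (mo' v)))"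
      by simp
  next
    show "0 \<le> \<rho> r mo p" for r mo p
      using ff_pos[OF s0 s1] by (auto simp: \<rho>_def less_imp_le)
  next
    fix r mo and F :: "(nat \<times> nat) set" assume "finite F"
    then show "sum (\<rho> r mo) F \<le> 16 / (1 - s^4)^2"
      using boundC[OF s0 s1, of F] by (simp add: \<rho>_def)
  qed
  qed
  ultimately show ?thesis by blast
qed


lemma case_III:
  assumes gi: "ginv G"
    and zL: "z \<in> leaf_slots G" and zz: "gdash G z = z'" and fr: "fresh G v v'"
    and a: "a \<in> {3,4}" and c: "c \<in> {3,4}" and ko: "keep_old G G' v v'"
    and par: "\<forall>u\<in>gV G. gpar G' u = gpar G u" and pv: "gpar G' v = z" and pv': "gpar G' v' = Ch v a"
    and d1: "dpair G' (Ch v 2) (Ch v' c)" and d2: "dpair G' (Ch v (7 - a)) (Ch v' 2)"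
    and d3: "dpair G' (Ch v' (7 - c)) z'"
    and old: "\<forall>t\<in>leaf_slots G - {z, z'}. gdash G' t = gdash G t"
  shows "ginv G' \<and> (\<forall>s. 0 < s \<longrightarrow> s < 1 \<longrightarrow> claim s G \<longrightarrow> claim s G')"
proof -
  have finG: "finite (gV G)" and parS: "gpar G ` gV G \<subseteq> slots G" using gi by (auto simp: ginv_def)
  have z'L: "z' \<in> leaf_slots G" and znz: "z \<noteq> z'" and z'z: "gdash G z' = z"
    using gi zL zz by (auto simp: ginv_def)
  have VG': "gV G' = insert v (insert v' (gV G))" using ko by (simp add: keep_old_def)
  have vv: "v \<notin> gV G" "v' \<notin> gV G" "v \<noteq> v'" using fr by (auto simp: fresh_def)
  define NS where "NS = {Ch v 2, Ch v 3, Ch v 4, Ch v' 2, Ch v' 3, Ch v' 4}"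
  define N where "N = {Ch v 2, Ch v (7 - a), Ch v' 2, Ch v' 3, Ch v' 4}"
  have sG': "slots G' = slots G \<union> NS" using slotsG'[OF ko] by (simp add: NS_def)
  have NSd: "NS \<inter> slots G = {}" using new_notin[OF fr] by (simp add: NS_def)
  have zS: "z \<in> slots G" "z' \<in> slots G" using zL z'L leaf_sub by blast+
  have img: "gpar G' ` gV G' = gpar G ` gV G \<union> {z, Ch v a}"
  proof -
    have "gpar G' ` gV G = gpar G ` gV G" using par by (intro image_cong) auto
    then show ?thesis using VG' pv pv' by auto
  qed
  have L': "leaf_slots G' = (leaf_slots G - {z}) \<union> N"
  proof -
    have "leaf_slots G' = (leaf_slots G - {z, Ch v a}) \<union> (NS - {z, Ch v a})"
      by (rule leaf_G'[OF sG' NSd img parS])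
    moreover have "NS - {z, Ch v a} = N" using NSd zS vv a by (auto simp: NS_def N_def)
    moreover have "leaf_slots G - {z, Ch v a} = leaf_slots G - {z}" using NSd leaf_sub a by (auto simp: NS_def)
    ultimately show ?thesis by simp
  qed
  have NL: "N \<subseteq> leaf_slots G'" using L' by auto
  have z'L': "z' \<in> leaf_slots G'" using L' z'L znz by auto
  have gd: "gdash G' z' = Ch v' (7 - c)" "gdash G' (Ch v 2) = Ch v' c"
    using d1 d3 by (auto simp: dpair_def)
  have key: "\<exists>S j k k2. mo' v = (S,j,k) \<and> mo' v' = (S, if a = 3 then k else S - k, k2) \<and> j \<le> S \<and> k \<le> S \<and> k2 \<le> S \<and>
      j = smom r mo' z \<and> j = smom r mo' z' \<and> k2 = (if c = 3 then S - j else j)"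
    if mo': "mo' \<in> adm2 r G'" for r mo'
  proof -
    obtain S j k j2 k2 where e1: "mo' v = (S,j,k)" and e2: "mo' v' = (S,j2,k2)" and b: "j \<le> S" "k \<le> S" "j2 \<le> S" "k2 \<le> S"
      and jj: "j = smom r mo' (gpar G' v)" and jj2: "j2 = smom r mo' (gpar G' v')"
      using new_facts[OF mo' ko fr] by metis
    have dd: "\<forall>t\<in>leaf_slots G'. smom r mo' t = smom r mo' (gdash G' t)" using mo' by (simp add: adm2_def)
    have j2: "j2 = (if a = 3 then k else S - k)" using jj2 pv' e1 a by (auto simp: emom_def)
    have "smom r mo' (Ch v 2) = smom r mo' (Ch v' c)" using dd NL gd by (auto simp: N_def)
    then have k2: "k2 = (if c = 3 then S - j else j)" using e1 e2 b c by (auto simp: emom_def)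
    have "smom r mo' z' = smom r mo' (Ch v' (7 - c))" using dd z'L' gd by auto
    then have jz': "smom r mo' z' = j" using e2 k2 b c by (auto simp: emom_def)
    show ?thesis using e1 e2 b jj j2 k2 pv jz' by auto
  qed
  have gi': "ginv G'"
  proof -
    have giL: "\<forall>t\<in>leaf_slots G. gdash G t \<in> leaf_slots G \<and> gdash G t \<noteq> t \<and> gdash G (gdash G t) = t"
      using gi by (simp add: ginv_def)
    have old': "\<forall>t\<in>leaf_slots G - {z, z'}. gdash G' t = gdash G t" using old by simp
    have "\<forall>t\<in>leaf_slots G'. gdash G' t \<in> leaf_slots G' \<and> gdash G' t \<noteq> t \<and> gdash G' (gdash G' t) = t"
    proof (rule leaf_inv_gen[OF L' old' giL])
      show "\<forall>t\<in>{z, z'}. gdash G t \<in> {z, z'}" using zz z'z by auto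
      show "{z} \<subseteq> {z, z'}" by auto
      show "{z, z'} \<subseteq> leaf_slots G" using zL z'L by simp
      show "\<forall>t\<in>N \<union> ({z, z'} - {z}). gdash G' t \<in> N \<union> ({z, z'} - {z}) \<and> gdash G' t \<noteq> t \<and> gdash G' (gdash G' t) = t"
        using d1 d2 d3 vv znz zS NSd a c by (auto simp: N_def NS_def dpair_def)
    qed
    moreover have "\<forall>u\<in>gV G'. gpar G' u \<in> slots G'" using VG' par pv pv' zS gi sG' a by (auto simp: ginv_def NS_def)
    moreover have "\<forall>u\<in>gV G'. gmate G' u \<in> gV G'" using ko gi VG' by (auto simp: keep_old_def ginv_def)
    ultimately show ?thesis using finG VG' by (simp add: ginv_def)
  qed
  moreover have "claim s G'" if s0: "0 < s" and s1: "s < 1" and IH: "claim s G" for s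
  proof -
  define \<rho> where "\<rho> r mo p = (if smom r mo z \<le> fst p \<and> snd p \<le> fst p then
      ff s (fst p - smom r mo z) * ff s (if a = 4 then snd p else fst p - snd p) else 0)"
    for r mo and p :: "nat \<times> nat"
  show ?thesis
  proof (rule step[OF s0 s1 IH finG vv VG', where \<rho> = \<rho>])
    fix r mo' assume mo': "mo' \<in> adm2 r G'"
    obtain S j k k2 where e1: "mo' v = (S,j,k)" and jz: "j = smom r mo' z" and jz': "j = smom r mo' z'"
      using key[OF mo'] by blast
    have dd: "\<forall>t\<in>leaf_slots G'. smom r mo' t = smom r mo' (gdash G' t)" 
      and pp: "\<forall>u\<in>gV G'. emom mo' u 1 = smom r mo' (gpar G' u)" using mo' by (auto simp: adm2_def)
    show "restr G mo' \<in> adm2 r G"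
    proof (rule restr_adm[OF gi ko mo'])
      show "\<forall>u\<in>gV G. emom mo' u 1 = smom r mo' (gpar G u)" using pp par VG' by auto
      show "\<forall>t\<in>leaf_slots G. smom r mo' t = smom r mo' (gdash G t)"
      proof
        fix t assume t: "t \<in> leaf_slots G"
        show "smom r mo' t = smom r mo' (gdash G t)"
        proof (cases "t = z \<or> t = z'")
          case True then show ?thesis using jz jz' zz z'z by auto
        next
          case False
          then have "t \<in> leaf_slots G'" "gdash G' t = gdash G t" using t L' old by auto
          then show ?thesis using dd by metis
        qed
      qed
    qed
  next
    fix r
    have hv: "mo' v = (fst (mo' v), smom r (restr G mo') z, snd (snd (mo' v))) \<and>
        mo' v' = (fst (mo' v), if a = 3 then snd (snd (mo' v)) else fst (mo' v) - snd (snd (mo' v)),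
                  if c = 3 then fst (mo' v) - smom r (restr G mo') z else smom r (restr G mo') z)"
      if mo': "mo' \<in> adm2 r G'" for mo'
    proof -
      obtain S j k k2 where e1: "mo' v = (S,j,k)" and e2: "mo' v' = (S, if a = 3 then k else S - k, k2)"
        and jx: "j = smom r mo' z" and k2: "k2 = (if c = 3 then S - j else j)"
        using key[OF mo'] by blast
      have "smom r (restr G mo') z = smom r mo' z" using zS by (simp add: smom_restr)
      then show ?thesis using e1 e2 jx k2 by auto
    qed
    show "inj_on (\<lambda>mo'. (restr G mo', fst (mo' v), snd (snd (mo' v)))) (adm2 r G')"
      apply (rule inj_gen[OF VG', where \<Phi> = "\<lambda>mo p. (fst p, smom r mo z, snd p)"
          and \<Psi> = "\<lambda>mo p. (fst p, if a = 3 then snd p else fst p - snd p,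
                  if c = 3 then fst p - smom r mo z else smom r mo z)"])
        apply (simp add: adm2_def)
       apply (simp only: fst_conv snd_conv)
       apply (drule hv, erule conjunct1)
      apply (simp only: fst_conv snd_conv)
      apply (drule hv, erule conjunct2)
      done
  next
    fix r mo' assume mo': "mo' \<in> adm2 r G'"
    obtain S j k k2 where e1: "mo' v = (S,j,k)" and e2: "mo' v' = (S, if a = 3 then k else S - k, k2)" and b: "j \<le> S" "k \<le> S" "k2 \<le> S"
      and jz: "j = smom r mo' z" and k2: "k2 = (if c = 3 then S - j else j)"
      using key[OF mo'] by blast
    define Kb where "Kb = (if a = 4 then k else S - k)"
    have ws: "wt s r G' mo' * (\<Prod>t\<in>{z}. ph s (smom r mo' t)) = wt s r G (restr G mo') * (\<Prod>t\<in>N. ph s (smom r mo' t))"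
      by (rule wt_split[OF s0 s1 finG L']) (use zL NSd a in \<open>auto simp: NS_def N_def\<close>)
    have pR: "(\<Prod>t\<in>{z}. ph s (smom r mo' t)) = ph s j" using jz by simp
    have pN: "(\<Prod>t\<in>N. ph s (smom r mo' t)) = ph s j * (ff s (S - j) * ff s Kb)"
    proof -
      have "(\<Prod>t\<in>N. ph s (smom r mo' t)) = ph s (S - j) * ph s Kb * ph s Kb * ph s (S - j) * ph s j"
        using vv e1 e2 a c k2 b by (auto simp: N_def emom_def Kb_def)
      also have "\<dots> = ph s j * ((ph s (S - j) * ph s (S - j)) * (ph s Kb * ph s Kb))"
        by (simp add: ac_simps)
      finally show ?thesis by (simp add: ph_sq[OF s0 s1])
    qed
    have "wt s r G' mo' = wt s r G (restr G mo') * (ff s (S - j) * ff s Kb)"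
      using ws pR pN ph_pos[OF s0 s1, of j] by (simp add: field_simps)
    also have "\<dots> = wt s r G (restr G mo') * \<rho> r (restr G mo') (fst (mo' v), snd (snd (mo' v)))"
    proof -
      have "smom r (restr G mo') z = j" using zS jz by (simp add: smom_restr)
      then show ?thesis using b e1 jz by (simp add: \<rho>_def Kb_def)
    qed
    finally show "wt s r G' mo' \<le> wt s r G (restr G mo') * \<rho> r (restr G mo') (fst (mo' v), snd (snd (mo' v)))"
      by simp
  next
    show "0 \<le> \<rho> r mo p" for r mo p
      using ff_pos[OF s0 s1] by (auto simp: \<rho>_def less_imp_le)
  next
    fix r mo and F :: "(nat \<times> nat) set" assume "finite F"
    then show "sum (\<rho> r mo) F \<le> 16 / (1 - s^4)^2"
      using boundD[OF s0 s1, of F "smom r mo z" "a = 4"] by (simp add: \<rho>_def)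
  qed
  qed
  ultimately show ?thesis by blast
qed


lemma case_IIs:
  assumes gi: "ginv G"
    and zV: "z \<in> gV G" and fr: "fresh G v v'" and ko: "keep_old G G' v v'"
    and par: "\<forall>u\<in>gV G - {z}. gpar G' u = gpar G u" and pv: "gpar G' v = gpar G z"
    and pv': "gpar G' v' = Ch v 2" and pz: "gpar G' z = Ch v' 2"
    and d3: "dpair G' (Ch v 3) (Ch v' (sg sw 3))"
    and d4: "dpair G' (Ch v 4) (Ch v' (sg sw 4))"
    and old: "\<forall>t\<in>leaf_slots G. gdash G' t = gdash G t"
  shows "ginv G' \<and> (\<forall>s. 0 < s \<longrightarrow> s < 1 \<longrightarrow> claim s G \<longrightarrow> claim s G')"
proof -
  have finG: "finite (gV G)" and parS: "gpar G ` gV G \<subseteq> slots G" using gi by (auto simp: ginv_def)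
  have VG': "gV G' = insert v (insert v' (gV G))" using ko by (simp add: keep_old_def)
  have vv: "v \<notin> gV G" "v' \<notin> gV G" "v \<noteq> v'" using fr by (auto simp: fresh_def)
  define NS where "NS = {Ch v 2, Ch v 3, Ch v 4, Ch v' 2, Ch v' 3, Ch v' 4}"
  define N where "N = {Ch v 3, Ch v 4, Ch v' 3, Ch v' 4}"
  have sG': "slots G' = slots G \<union> NS" using slotsG'[OF ko] by (simp add: NS_def)
  have NSd: "NS \<inter> slots G = {}" using new_notin[OF fr] by (simp add: NS_def)
  have pzS: "gpar G z \<in> slots G" using parS zV by auto
  have img: "gpar G' ` gV G' = gpar G ` gV G \<union> {Ch v 2, Ch v' 2}"
  proof -
    have "gpar G' ` gV G = gpar G ` (gV G - {z}) \<union> {Ch v' 2}"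
    proof -
      have "gV G = insert z (gV G - {z})" using zV by auto
      then have "gpar G' ` gV G = insert (gpar G' z) (gpar G' ` (gV G - {z}))" by (metis image_insert)
      moreover have "gpar G' ` (gV G - {z}) = gpar G ` (gV G - {z})" using par by (intro image_cong) auto
      ultimately show ?thesis using pz by auto
    qed
    moreover have "gpar G ` gV G = insert (gpar G z) (gpar G ` (gV G - {z}))" using zV by auto
    ultimately show ?thesis using VG' pv pv' by auto
  qed
  have L': "leaf_slots G' = (leaf_slots G - {}) \<union> N"
  proof -
    have "leaf_slots G' = (leaf_slots G - {Ch v 2, Ch v' 2}) \<union> (NS - {Ch v 2, Ch v' 2})"
      by (rule leaf_G'[OF sG' NSd img parS])
    moreover have "NS - {Ch v 2, Ch v' 2} = N" using vv by (auto simp: NS_def N_def)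
    moreover have "leaf_slots G - {Ch v 2, Ch v' 2} = leaf_slots G" using NSd leaf_sub by (auto simp: NS_def)
    ultimately show ?thesis by simp
  qed
  have NL: "N \<subseteq> leaf_slots G'" using L' by auto
  have gd: "gdash G' (Ch v 3) = Ch v' (sg sw 3)" "gdash G' (Ch v 4) = Ch v' (sg sw 4)"
    using d3 d4 by (auto simp: dpair_def)
  have key: "\<exists>S j k k2. mo' v = (S,j,k) \<and> mo' v' = (S,S - j,k2) \<and> j \<le> S \<and> k \<le> S \<and> k2 \<le> S \<and>
      j = smom r mo' (gpar G z) \<and> emom mo' z 1 = j \<and> k2 = (if sw then S - k else k) \<and> emom mo' v' 4 = (if sw then k else S - k)"
    if mo': "mo' \<in> adm2 r G'" for r mo'
  proof -
    obtain S j k j2 k2 where e1: "mo' v = (S,j,k)" and e2: "mo' v' = (S,j2,k2)" and b: "j \<le> S" "k \<le> S" "j2 \<le> S" "k2 \<le> S"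
      and jj: "j = smom r mo' (gpar G' v)" and jj2: "j2 = smom r mo' (gpar G' v')"
      using new_facts[OF mo' ko fr] by metis
    have dd: "\<forall>t\<in>leaf_slots G'. smom r mo' t = smom r mo' (gdash G' t)" using mo' by (simp add: adm2_def)
    have pp: "\<forall>u\<in>gV G'. emom mo' u 1 = smom r mo' (gpar G' u)" using mo' by (simp add: adm2_def)
    have j2: "j2 = S - j" using jj2 pv' e1 by (simp add: emom_def)
    have "emom mo' z 1 = smom r mo' (Ch v' 2)" using pp VG' zV pz by auto
    then have jz: "emom mo' z 1 = j" using e2 j2 b by (simp add: emom_def)
    have h3: "smom r mo' (Ch v 3) = smom r mo' (Ch v' (sg sw 3))" using dd NL gd by (auto simp: N_def)
    have h4: "smom r mo' (Ch v 4) = smom r mo' (Ch v' (sg sw 4))" using dd NL gd by (auto simp: N_def)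
    have k2: "k2 = (if sw then S - k else k)" and e4: "emom mo' v' 4 = (if sw then k else S - k)"
      using h3 h4 e1 e2 b by (cases sw; simp add: sg_def emom_def)+
    show ?thesis using e1 e2 b jj j2 k2 e4 pv jz by auto
  qed
  have gi': "ginv G'"
  proof -
    have giL: "\<forall>t\<in>leaf_slots G. gdash G t \<in> leaf_slots G \<and> gdash G t \<noteq> t \<and> gdash G (gdash G t) = t"
      using gi by (simp add: ginv_def)
    have old': "\<forall>t\<in>leaf_slots G - {}. gdash G' t = gdash G t" using old by simp
    have "\<forall>t\<in>leaf_slots G'. gdash G' t \<in> leaf_slots G' \<and> gdash G' t \<noteq> t \<and> gdash G' (gdash G' t) = t"
    proof (rule leaf_inv_gen[OF L' old' giL])
      show "\<forall>t\<in>{}. gdash G t \<in> {}" by simp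
      show "{} \<subseteq> {}" by auto
      show "{} \<subseteq> leaf_slots G" by simp
      show "\<forall>t\<in>N \<union> ({} - {}). gdash G' t \<in> N \<union> ({} - {}) \<and> gdash G' t \<noteq> t \<and> gdash G' (gdash G' t) = t"
        using d3 d4 vv by (cases sw) (auto simp: N_def dpair_def sg_def)
    qed
    moreover have "\<forall>u\<in>gV G'. gpar G' u \<in> slots G'"
    proof
      fix u assume u: "u \<in> gV G'"
      then consider "u = v" | "u = v'" | "u = z" | "u \<in> gV G - {z}" using VG' by auto
      then show "gpar G' u \<in> slots G'"
      proof cases
        case 4 then show ?thesis using par gi sG' by (auto simp: ginv_def)
      qed (use pv pv' pz pzS sG' in \<open>auto simp: NS_def\<close>)
    qed
    moreover have "\<forall>u\<in>gV G'. gmate G' u \<in> gV G'" using ko gi VG' by (auto simp: keep_old_def ginv_def)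
    ultimately show ?thesis using finG VG' by (simp add: ginv_def)
  qed
  moreover have "claim s G'" if s0: "0 < s" and s1: "s < 1" and IH: "claim s G" for s
  proof -
  define \<rho> where "\<rho> r mo p = (if snd p \<le> fst p then ff s (snd p) * ff s (fst p - snd p) else 0)"
    for r :: nat and mo :: mom and p :: "nat \<times> nat"
  show ?thesis
  proof (rule step[OF s0 s1 IH finG vv VG', where \<rho> = \<rho>])
    fix r mo' assume mo': "mo' \<in> adm2 r G'"
    obtain S j k k2 where e1: "mo' v = (S,j,k)" and jz: "j = smom r mo' (gpar G z)" and jz': "emom mo' z 1 = j"
      using key[OF mo'] by blast
    have dd: "\<forall>t\<in>leaf_slots G'. smom r mo' t = smom r mo' (gdash G' t)" 
      and pp: "\<forall>u\<in>gV G'. emom mo' u 1 = smom r mo' (gpar G' u)" using mo' by (auto simp: adm2_def)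
    show "restr G mo' \<in> adm2 r G"
    proof (rule restr_adm[OF gi ko mo'])
      show "\<forall>u\<in>gV G. emom mo' u 1 = smom r mo' (gpar G u)"
      proof
        fix u assume u: "u \<in> gV G"
        show "emom mo' u 1 = smom r mo' (gpar G u)"
        proof (cases "u = z")
          case True then show ?thesis using jz jz' by simp
        next
          case False then show ?thesis using pp par VG' u by auto
        qed
      qed
      show "\<forall>t\<in>leaf_slots G. smom r mo' t = smom r mo' (gdash G t)"
      proof
        fix t assume t: "t \<in> leaf_slots G"
        then have "t \<in> leaf_slots G'" "gdash G' t = gdash G t" using t L' old by auto
        then show "smom r mo' t = smom r mo' (gdash G t)" using dd by metis
      qed
    qed
  next
    fix r
    have hv: "mo' v = (fst (mo' v), smom r (restr G mo') (gpar G z), snd (snd (mo' v))) \<and>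
        mo' v' = (fst (mo' v), fst (mo' v) - smom r (restr G mo') (gpar G z), if sw then fst (mo' v) - snd (snd (mo' v)) else snd (snd (mo' v)))"
      if mo': "mo' \<in> adm2 r G'" for mo'
    proof -
      obtain S j k k2 where e1: "mo' v = (S,j,k)" and e2: "mo' v' = (S,S - j,k2)"
        and jx: "j = smom r mo' (gpar G z)" and k2: "k2 = (if sw then S - k else k)"
        using key[OF mo'] by blast
      have "smom r (restr G mo') (gpar G z) = smom r mo' (gpar G z)" using pzS by (simp add: smom_restr)
      then show ?thesis using e1 e2 jx k2 by auto
    qed
    show "inj_on (\<lambda>mo'. (restr G mo', fst (mo' v), snd (snd (mo' v)))) (adm2 r G')"
      apply (rule inj_gen[OF VG', where \<Phi> = "\<lambda>mo p. (fst p, smom r mo (gpar G z), snd p)"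
          and \<Psi> = "\<lambda>mo p. (fst p, fst p - smom r mo (gpar G z), if sw then fst p - snd p else snd p)"])
        apply (simp add: adm2_def)
       apply (simp only: fst_conv snd_conv)
       apply (drule hv, erule conjunct1)
      apply (simp only: fst_conv snd_conv)
      apply (drule hv, erule conjunct2)
      done
  next
    fix r mo' assume mo': "mo' \<in> adm2 r G'"
    obtain S j k k2 where e1: "mo' v = (S,j,k)" and e2: "mo' v' = (S,S - j,k2)" and b: "j \<le> S" "k \<le> S"
      and k2: "k2 = (if sw then S - k else k)"
      and e4: "emom mo' v' 4 = (if sw then k else S - k)"
      using key[OF mo'] by blast
    have ws: "wt s r G' mo' * (\<Prod>t\<in>{}. ph s (smom r mo' t)) = wt s r G (restr G mo') * (\<Prod>t\<in>N. ph s (smom r mo' t))"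
      by (rule wt_split[OF s0 s1 finG L']) (use NSd in \<open>auto simp: NS_def N_def\<close>)
    have pN: "(\<Prod>t\<in>N. ph s (smom r mo' t)) = ff s k * ff s (S - k)"
    proof -
      have "(\<Prod>t\<in>N. ph s (smom r mo' t)) = ph s k * ph s (S - k) * ph s (emom mo' v' 3) * ph s (emom mo' v' 4)"
        using vv e1 e2 by (simp add: N_def emom_def)
      also have "\<dots> = ph s k * ph s (S - k) * ph s k * ph s (S - k)"
        using e2 k2 e4 b by (cases sw) (auto simp: emom_def)
      also have "\<dots> = (ph s k * ph s k) * (ph s (S - k) * ph s (S - k))"
        by (simp add: ac_simps)
      finally show ?thesis by (simp add: ph_sq[OF s0 s1])
    qed
    have "wt s r G' mo' = wt s r G (restr G mo') * (ff s k * ff s (S - k))"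
      using ws pN by simp
    also have "\<dots> = wt s r G (restr G mo') * \<rho> r (restr G mo') (fst (mo' v), snd (snd (mo' v)))"
      using b e1 by (simp add: \<rho>_def)
    finally show "wt s r G' mo' \<le> wt s r G (restr G mo') * \<rho> r (restr G mo') (fst (mo' v), snd (snd (mo' v)))"
      by simp
  next
    show "0 \<le> \<rho> r mo p" for r mo p
      using ff_pos[OF s0 s1] by (auto simp: \<rho>_def less_imp_le)
  next
    fix r mo and F :: "(nat \<times> nat) set" assume "finite F"
    then show "sum (\<rho> r mo) F \<le> 16 / (1 - s^4)^2"
      using boundC[OF s0 s1, of F] by (simp add: \<rho>_def)
  qed
  qed
  ultimately show ?thesis by blast
qed


lemma case_IIIs:
  assumes gi: "ginv G"
    and zV: "z \<in> gV G" and fr: "fresh G v v'" and a: "a \<in> {3,4}" and c: "c \<in> {3,4}"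
    and ko: "keep_old G G' v v'"
    and par: "\<forall>u\<in>gV G - {z}. gpar G' u = gpar G u" and pv: "gpar G' v = gpar G z"
    and pv': "gpar G' v' = Ch v a" and pz: "gpar G' z = Ch v' c"
    and d1: "dpair G' (Ch v 2) (Ch v' (7 - c))" and d2: "dpair G' (Ch v (7 - a)) (Ch v' 2)"
    and old: "\<forall>t\<in>leaf_slots G. gdash G' t = gdash G t"
  shows "ginv G' \<and> (\<forall>s. 0 < s \<longrightarrow> s < 1 \<longrightarrow> claim s G \<longrightarrow> claim s G')"
proof -
  have finG: "finite (gV G)" and parS: "gpar G ` gV G \<subseteq> slots G" using gi by (auto simp: ginv_def)
  have VG': "gV G' = insert v (insert v' (gV G))" using ko by (simp add: keep_old_def)
  have vv: "v \<notin> gV G" "v' \<notin> gV G" "v \<noteq> v'" using fr by (auto simp: fresh_def)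
  define NS where "NS = {Ch v 2, Ch v 3, Ch v 4, Ch v' 2, Ch v' 3, Ch v' 4}"
  define N where "N = {Ch v 2, Ch v (7 - a), Ch v' 2, Ch v' (7 - c)}"
  have sG': "slots G' = slots G \<union> NS" using slotsG'[OF ko] by (simp add: NS_def)
  have NSd: "NS \<inter> slots G = {}" using new_notin[OF fr] by (simp add: NS_def)
  have pzS: "gpar G z \<in> slots G" using parS zV by auto
  have img: "gpar G' ` gV G' = gpar G ` gV G \<union> {Ch v a, Ch v' c}"
  proof -
    have "gpar G' ` gV G = gpar G ` (gV G - {z}) \<union> {Ch v' c}"
    proof -
      have "gV G = insert z (gV G - {z})" using zV by auto
      then have "gpar G' ` gV G = insert (gpar G' z) (gpar G' ` (gV G - {z}))" by (metis image_insert)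
      moreover have "gpar G' ` (gV G - {z}) = gpar G ` (gV G - {z})" using par by (intro image_cong) auto
      ultimately show ?thesis using pz by auto
    qed
    moreover have "gpar G ` gV G = insert (gpar G z) (gpar G ` (gV G - {z}))" using zV by auto
    ultimately show ?thesis using VG' pv pv' by auto
  qed
  have L': "leaf_slots G' = (leaf_slots G - {}) \<union> N"
  proof -
    have "leaf_slots G' = (leaf_slots G - {Ch v a, Ch v' c}) \<union> (NS - {Ch v a, Ch v' c})"
      by (rule leaf_G'[OF sG' NSd img parS])
    moreover have "NS - {Ch v a, Ch v' c} = N" using vv a c by (auto simp: NS_def N_def)
    moreover have "leaf_slots G - {Ch v a, Ch v' c} = leaf_slots G" using NSd leaf_sub a c by (auto simp: NS_def)
    ultimately show ?thesis by simp
  qed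
  have NL: "N \<subseteq> leaf_slots G'" using L' by auto
  have gd: "gdash G' (Ch v 2) = Ch v' (7 - c)"
    using d1 by (auto simp: dpair_def)
  have key: "\<exists>S j k k2. mo' v = (S,j,k) \<and> mo' v' = (S, if a = 3 then k else S - k, k2) \<and> j \<le> S \<and> k \<le> S \<and> k2 \<le> S \<and>
      j = smom r mo' (gpar G z) \<and> emom mo' z 1 = j \<and> k2 = (if c = 3 then j else S - j)"
    if mo': "mo' \<in> adm2 r G'" for r mo'
  proof -
    obtain S j k j2 k2 where e1: "mo' v = (S,j,k)" and e2: "mo' v' = (S,j2,k2)" and b: "j \<le> S" "k \<le> S" "j2 \<le> S" "k2 \<le> S"
      and jj: "j = smom r mo' (gpar G' v)" and jj2: "j2 = smom r mo' (gpar G' v')"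
      using new_facts[OF mo' ko fr] by metis
    have dd: "\<forall>t\<in>leaf_slots G'. smom r mo' t = smom r mo' (gdash G' t)" using mo' by (simp add: adm2_def)
    have pp: "\<forall>u\<in>gV G'. emom mo' u 1 = smom r mo' (gpar G' u)" using mo' by (simp add: adm2_def)
    have j2: "j2 = (if a = 3 then k else S - k)" using jj2 pv' e1 a by (auto simp: emom_def)
    have "smom r mo' (Ch v 2) = smom r mo' (Ch v' (7 - c))" using dd NL gd by (auto simp: N_def)
    then have k2: "k2 = (if c = 3 then j else S - j)" using e1 e2 b c by (auto simp: emom_def)
    have "emom mo' z 1 = smom r mo' (Ch v' c)" using pp VG' zV pz by auto
    then have jz: "emom mo' z 1 = j" using e2 k2 b c by (auto simp: emom_def)
    show ?thesis using e1 e2 b jj j2 k2 pv jz by auto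
  qed
  have gi': "ginv G'"
  proof -
    have giL: "\<forall>t\<in>leaf_slots G. gdash G t \<in> leaf_slots G \<and> gdash G t \<noteq> t \<and> gdash G (gdash G t) = t"
      using gi by (simp add: ginv_def)
    have old': "\<forall>t\<in>leaf_slots G - {}. gdash G' t = gdash G t" using old by simp
    have "\<forall>t\<in>leaf_slots G'. gdash G' t \<in> leaf_slots G' \<and> gdash G' t \<noteq> t \<and> gdash G' (gdash G' t) = t"
    proof (rule leaf_inv_gen[OF L' old' giL])
      show "\<forall>t\<in>{}. gdash G t \<in> {}" by simp
      show "{} \<subseteq> {}" by auto
      show "{} \<subseteq> leaf_slots G" by simp
      show "\<forall>t\<in>N \<union> ({} - {}). gdash G' t \<in> N \<union> ({} - {}) \<and> gdash G' t \<noteq> t \<and> gdash G' (gdash G' t) = t"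
        using d1 d2 vv a c by (auto simp: N_def dpair_def)
    qed
    moreover have "\<forall>u\<in>gV G'. gpar G' u \<in> slots G'"
    proof
      fix u assume u: "u \<in> gV G'"
      then consider "u = v" | "u = v'" | "u = z" | "u \<in> gV G - {z}" using VG' by auto
      then show "gpar G' u \<in> slots G'"
      proof cases
        case 4 then show ?thesis using par gi sG' by (auto simp: ginv_def)
      qed (use pv pv' pz pzS sG' a c in \<open>auto simp: NS_def\<close>)
    qed
    moreover have "\<forall>u\<in>gV G'. gmate G' u \<in> gV G'" using ko gi VG' by (auto simp: keep_old_def ginv_def)
    ultimately show ?thesis using finG VG' by (simp add: ginv_def)
  qed
  moreover have "claim s G'" if s0: "0 < s" and s1: "s < 1" and IH: "claim s G" for s
  proof -
  define \<rho> where "\<rho> r mo p = (if smom r mo (gpar G z) \<le> fst p \<and> snd p \<le> fst p then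
      ff s (fst p - smom r mo (gpar G z)) * ff s (if a = 4 then snd p else fst p - snd p) else 0)"
    for r mo and p :: "nat \<times> nat"
  show ?thesis
  proof (rule step[OF s0 s1 IH finG vv VG', where \<rho> = \<rho>])
    fix r mo' assume mo': "mo' \<in> adm2 r G'"
    obtain S j k k2 where e1: "mo' v = (S,j,k)" and jz: "j = smom r mo' (gpar G z)" and jz': "emom mo' z 1 = j"
      using key[OF mo'] by blast
    have dd: "\<forall>t\<in>leaf_slots G'. smom r mo' t = smom r mo' (gdash G' t)" 
      and pp: "\<forall>u\<in>gV G'. emom mo' u 1 = smom r mo' (gpar G' u)" using mo' by (auto simp: adm2_def)
    show "restr G mo' \<in> adm2 r G"
    proof (rule restr_adm[OF gi ko mo'])
      show "\<forall>u\<in>gV G. emom mo' u 1 = smom r mo' (gpar G u)"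
      proof
        fix u assume u: "u \<in> gV G"
        show "emom mo' u 1 = smom r mo' (gpar G u)"
        proof (cases "u = z")
          case True then show ?thesis using jz jz' by simp
        next
          case False then show ?thesis using pp par VG' u by auto
        qed
      qed
      show "\<forall>t\<in>leaf_slots G. smom r mo' t = smom r mo' (gdash G t)"
      proof
        fix t assume t: "t \<in> leaf_slots G"
        then have "t \<in> leaf_slots G'" "gdash G' t = gdash G t" using t L' old by auto
        then show "smom r mo' t = smom r mo' (gdash G t)" using dd by metis
      qed
    qed
  next
    fix r
    have hv: "mo' v = (fst (mo' v), smom r (restr G mo') (gpar G z), snd (snd (mo' v))) \<and>
        mo' v' = (fst (mo' v), if a = 3 then snd (snd (mo' v)) else fst (mo' v) - snd (snd (mo' v)),
                  if c = 3 then smom r (restr G mo') (gpar G z) else fst (mo' v) - smom r (restr G mo') (gpar G z))"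
      if mo': "mo' \<in> adm2 r G'" for mo'
    proof -
      obtain S j k k2 where e1: "mo' v = (S,j,k)" and e2: "mo' v' = (S, if a = 3 then k else S - k, k2)"
        and jx: "j = smom r mo' (gpar G z)" and k2: "k2 = (if c = 3 then j else S - j)"
        using key[OF mo'] by blast
      have "smom r (restr G mo') (gpar G z) = smom r mo' (gpar G z)" using pzS by (simp add: smom_restr)
      then show ?thesis using e1 e2 jx k2 by auto
    qed
    show "inj_on (\<lambda>mo'. (restr G mo', fst (mo' v), snd (snd (mo' v)))) (adm2 r G')"
      apply (rule inj_gen[OF VG', where \<Phi> = "\<lambda>mo p. (fst p, smom r mo (gpar G z), snd p)"
          and \<Psi> = "\<lambda>mo p. (fst p, if a = 3 then snd p else fst p - snd p,
                  if c = 3 then smom r mo (gpar G z) else fst p - smom r mo (gpar G z))"])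
        apply (simp add: adm2_def)
       apply (simp only: fst_conv snd_conv)
       apply (drule hv, erule conjunct1)
      apply (simp only: fst_conv snd_conv)
      apply (drule hv, erule conjunct2)
      done
  next
    fix r mo' assume mo': "mo' \<in> adm2 r G'"
    obtain S j k k2 where e1: "mo' v = (S,j,k)" and e2: "mo' v' = (S, if a = 3 then k else S - k, k2)" and b: "j \<le> S" "k \<le> S" "k2 \<le> S"
      and jz: "j = smom r mo' (gpar G z)" and k2: "k2 = (if c = 3 then j else S - j)"
      using key[OF mo'] by blast
    define Kb where "Kb = (if a = 4 then k else S - k)"
    have ws: "wt s r G' mo' * (\<Prod>t\<in>{}. ph s (smom r mo' t)) = wt s r G (restr G mo') * (\<Prod>t\<in>N. ph s (smom r mo' t))"
      by (rule wt_split[OF s0 s1 finG L']) (use NSd a c in \<open>auto simp: NS_def N_def\<close>)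
    have pN: "(\<Prod>t\<in>N. ph s (smom r mo' t)) = ff s (S - j) * ff s Kb"
    proof -
      have "(\<Prod>t\<in>N. ph s (smom r mo' t)) = ph s (S - j) * ph s Kb * ph s Kb * ph s (S - j)"
        using vv e1 e2 a c k2 b by (auto simp: N_def emom_def Kb_def)
      also have "\<dots> = (ph s (S - j) * ph s (S - j)) * (ph s Kb * ph s Kb)"
        by (simp add: ac_simps)
      finally show ?thesis by (simp add: ph_sq[OF s0 s1])
    qed
    have "wt s r G' mo' = wt s r G (restr G mo') * (ff s (S - j) * ff s Kb)"
      using ws pN by simp
    also have "\<dots> = wt s r G (restr G mo') * \<rho> r (restr G mo') (fst (mo' v), snd (snd (mo' v)))"
    proof -
      have "smom r (restr G mo') (gpar G z) = j" using pzS jz by (simp add: smom_restr)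
      then show ?thesis using b e1 jz by (simp add: \<rho>_def Kb_def)
    qed
    finally show "wt s r G' mo' \<le> wt s r G (restr G mo') * \<rho> r (restr G mo') (fst (mo' v), snd (snd (mo' v)))"
      by simp
  next
    show "0 \<le> \<rho> r mo p" for r mo p
      using ff_pos[OF s0 s1] by (auto simp: \<rho>_def less_imp_le)
  next
    fix r mo and F :: "(nat \<times> nat) set" assume "finite F"
    then show "sum (\<rho> r mo) F \<le> 16 / (1 - s^4)^2"
      using boundD[OF s0 s1, of F "smom r mo (gpar G z)" "a = 4"] by (simp add: \<rho>_def)
  qed
  qed
  ultimately show ?thesis by blast
qed


lemma melonic_main: "melonic G \<Longrightarrow> ginv G \<and> (\<forall>s. 0 < s \<longrightarrow> s < 1 \<longrightarrow> claim s G)"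
proof (induction rule: melonic.induct)
  case (trivial G) then show ?case using ginv_trivial claim_trivial by blast
next
  case (insI G x y v v' G' sw)
  have "ginv G' \<and> (\<forall>s. 0 < s \<longrightarrow> s < 1 \<longrightarrow> claim s G \<longrightarrow> claim s G')"
    using case_I[of G x y v v' G' sw] insI by blast
  then show ?case using insI.IH by blast
next
  case (insII G z z' v v' G' sw)
  have "ginv G' \<and> (\<forall>s. 0 < s \<longrightarrow> s < 1 \<longrightarrow> claim s G \<longrightarrow> claim s G')"
    using case_II[of G z z' v v' G' sw] insII by blast
  then show ?case using insII.IH by blast
next
  case (insIII G z z' v v' a c G')
  have "ginv G' \<and> (\<forall>s. 0 < s \<longrightarrow> s < 1 \<longrightarrow> claim s G \<longrightarrow> claim s G')"
    using case_III[of G z z' v v' a c G'] insIII by blast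
  then show ?case using insIII.IH by blast
next
  case (insIIs G z v v' G' sw)
  have "ginv G' \<and> (\<forall>s. 0 < s \<longrightarrow> s < 1 \<longrightarrow> claim s G \<longrightarrow> claim s G')"
    using case_IIs[of G z v v' G' sw] insIIs by blast
  then show ?case using insIIs.IH by blast
next
  case (insIIIs G z v v' a c G')
  have "ginv G' \<and> (\<forall>s. 0 < s \<longrightarrow> s < 1 \<longrightarrow> claim s G \<longrightarrow> claim s G')"
    using case_IIIs[of G z v v' a c G'] insIIIs by blast
  then show ?case using insIIIs.IH by blast
qed


lemma sty_exists:
  assumes ig: "is_graph n G"
  shows "\<forall>t\<in>slots G. \<exists>b. sty G t b"
proof -
  have par: "\<forall>v\<in>gV G. gpar G v \<in> slots G" and heap: "\<forall>v\<in>gV G. \<forall>u i. gpar G v = Ch u i \<longrightarrow> u < v"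
    using ig by (auto simp: is_graph_def)
  have A: "u \<in> gV G \<Longrightarrow> \<exists>b. sty G (gpar G u) b" for u
  proof (induction u rule: less_induct)
    case (less u)
    show ?case
    proof (cases "gpar G u")
      case RootA then show ?thesis using sty.intros(1) by auto
    next
      case RootB then show ?thesis using sty.intros(2) by auto
    next
      case (Ch w i)
      then have w: "w \<in> gV G" "i \<in> {2,3,4}" "w < u" using par heap less.prems by (auto simp: slots_def)
      then obtain b where b: "sty G (gpar G w) b" using less.IH by blast
      show ?thesis
      proof (cases "i = 2")
        case True
        have "sty G (Ch w 2) (\<not> b)" by (rule sty.intros(3)[OF w(1) b])
        then show ?thesis using Ch True by auto
      next
        case False then have i34: "i \<in> {3,4}" using w by auto
        have "sty G (Ch w i) b" by (rule sty.intros(4)[OF w(1) b i34])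
        then show ?thesis using Ch by auto
      qed
    qed
  qed
  show ?thesis
  proof
    fix t assume t: "t \<in> slots G"
    show "\<exists>b. sty G t b"
    proof (cases t)
      case RootA then show ?thesis using sty.intros(1) by auto
    next
      case RootB then show ?thesis using sty.intros(2) by auto
    next
      case (Ch u i)
      then have u: "u \<in> gV G" "i \<in> {2,3,4}" using t by (auto simp: slots_def)
      then obtain b where b: "sty G (gpar G u) b" using A by blast
      show ?thesis
      proof (cases "i = 2")
        case True
        have "sty G (Ch u 2) (\<not> b)" by (rule sty.intros(3)[OF u(1) b])
        then show ?thesis using Ch True by auto
      next
        case False then have i34: "i \<in> {3,4}" using u by auto
        have "sty G (Ch u i) b" by (rule sty.intros(4)[OF u(1) b i34])
        then show ?thesis using Ch by auto
      qed
    qed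
  qed
qed

lemma leaf_cover:
  assumes ig: "is_graph n G"
  shows "leaf_slots G = lvs G True \<union> lvs G False"
proof -
  have "\<forall>t\<in>slots G. \<exists>b. sty G t b" by (rule sty_exists[OF ig])
  then show ?thesis using leaf_sub by (auto simp: lvs_def) (metis (full_types) subsetD)
qed

lemma adm_sub:
  assumes ig: "is_graph n G"
  shows "admissible r G \<subseteq> adm2 r G"
proof
  fix mo assume mo: "mo \<in> admissible r G"
  have bij: "bij_betw (gdash G) (lvs G True) (lvs G False)" and inv: "\<forall>x\<in>lvs G True. gdash G (gdash G x) = x"
    using ig by (auto simp: is_graph_def)
  have dT: "\<forall>x\<in>lvs G True. smom r mo x = smom r mo (gdash G x)" using mo by (simp add: admissible_def)
  have "\<forall>x\<in>leaf_slots G. smom r mo x = smom r mo (gdash G x)"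
  proof
    fix x assume x: "x \<in> leaf_slots G"
    show "smom r mo x = smom r mo (gdash G x)"
    proof (cases "x \<in> lvs G True")
      case True then show ?thesis using dT by blast
    next
      case False
      then have "x \<in> lvs G False" using x leaf_cover[OF ig] by auto
      then obtain y where y: "y \<in> lvs G True" "x = gdash G y" using bij by (auto simp: bij_betw_def)
      then show ?thesis using dT inv by auto
    qed
  qed
  then show "mo \<in> adm2 r G" using mo by (simp add: admissible_def adm2_def)
qed

lemma wt_ge:
  assumes s0: "0 < s" and s1: "s < 1" and sp: "s^4 = p" and ig: "is_graph n G" and mo: "mo \<in> admissible r G"
  shows "(\<Prod>x\<in>lvs G True. p ^ smom r mo x) \<le> wt s r G mo"
proof -
  let ?g = "\<lambda>x. ph s (smom r mo x)"
  let ?T = "lvs G True" and ?F = "lvs G False"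
  have VG: "gV G = {1..n}" using ig by (simp add: is_graph_def)
  have finL: "finite (leaf_slots G)" using VG by (intro finite_leaf) simp
  have L: "leaf_slots G = ?T \<union> ?F" by (rule leaf_cover[OF ig])
  have finT: "finite ?T" "finite ?F" using finL L by (metis finite_Un)+
  have bij: "bij_betw (gdash G) ?T ?F" using ig by (simp add: is_graph_def)
  have dT: "\<forall>x\<in>?T. smom r mo x = smom r mo (gdash G x)" using mo by (simp add: admissible_def)
  have gpos: "\<And>x. 0 < ?g x" and gle: "\<And>x. ?g x \<le> 1" using ph_pos[OF s0 s1] ph_le1[OF s0 s1] by auto
  have pF: "prod ?g ?F = prod ?g ?T"
  proof -
    have "prod ?g ?F = prod (\<lambda>x. ?g (gdash G x)) ?T" by (rule prod.reindex_bij_betw[OF bij, symmetric])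
    also have "\<dots> = prod ?g ?T" using dT by (intro prod.cong) auto
    finally show ?thesis .
  qed
  have ui: "prod ?g (?T \<union> ?F) * prod ?g (?T \<inter> ?F) = prod ?g ?T * prod ?g ?F"
    using finT by (rule prod.union_inter)
  have i1: "prod ?g (?T \<inter> ?F) \<le> 1" using gpos gle by (intro prod_le_1) (auto intro: less_imp_le)
  have u0: "0 \<le> prod ?g (?T \<union> ?F)" using gpos by (intro prod_nonneg) (auto intro: less_imp_le)
  have "prod ?g ?T * prod ?g ?T \<le> prod ?g (?T \<union> ?F)"
    using ui pF i1 u0 by (metis mult_left_le)
  moreover have "prod ?g ?T * prod ?g ?T = (\<Prod>x\<in>?T. ff s (smom r mo x))"
    by (simp add: prod.distrib[symmetric] ph_sq[OF s0 s1])
  moreover have "(\<Prod>x\<in>?T. p ^ smom r mo x) \<le> (\<Prod>x\<in>?T. ff s (smom r mo x))"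
    using ff_ge[OF s0 s1] sp s0 by (intro prod_mono) auto
  ultimately show ?thesis using L by (simp add: wt_def)
qed

theorem lemma8:
  fixes p :: real and r n :: nat and G :: graph
  assumes "0 < p" "p < 1" "even n"
    and "is_graph n G" "melonic G"
  shows "amp p r G \<le> ennreal (4 ^ n * p powr (real r / 2))"
proof -
  note p0 = assms(1) and p1 = assms(2) and ig = assms(4) and mel = assms(5)
  define s where "s = root 4 p"
  have s0: "0 < s" using p0 by (simp add: s_def real_root_gt_zero)
  have s1: "s < 1" using p1 by (simp add: s_def)
  have sp: "s^4 = p" using p0 by (simp add: s_def)
  have cl: "claim s G" using melonic_main[OF mel] s0 s1 by blast
  have VG: "gV G = {1..n}" using ig by (simp add: is_graph_def)
  have card: "card (gV G) = n" using VG by simp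
  have q: "1 / (1 / (1 - p)) = 1 - p" by simp
  have "(\<Sum>\<^sub>\<infinity>mo\<in>admissible r G. ennreal (\<Prod>x\<in>lvs G True. p ^ smom r mo x))
      \<le> (\<Sum>\<^sub>\<infinity>mo\<in>adm2 r G. ennreal (wt s r G mo))"
    by (rule infsum_mono_neutral)
       (auto intro: nonneg_summable_on_complete ennreal_leI wt_ge[OF s0 s1 sp ig] dest: subsetD[OF adm_sub[OF ig]])
  also have "\<dots> \<le> ennreal ((4 / (1 - p))^n * ff s r)" using cl card sp by (simp add: claim_def)
  finally have S: "(\<Sum>\<^sub>\<infinity>mo\<in>admissible r G. ennreal (\<Prod>x\<in>lvs G True. p ^ smom r mo x)) \<le> ennreal ((4 / (1 - p))^n * ff s r)" .
  have "amp p r G \<le> ennreal ((1 - p)^n) * ennreal ((4 / (1 - p))^n * ff s r)"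
    unfolding amp_def card q using S by (intro mult_left_mono) auto
  also have "\<dots> = ennreal ((1 - p)^n * ((4 / (1 - p))^n * ff s r))"
    using p1 ff_pos[OF s0 s1, of r] by (simp add: ennreal_mult[symmetric])
  also have "(1 - p)^n * ((4 / (1 - p))^n * ff s r) = 4^n * ff s r"
    using p1 by (simp add: power_divide field_simps)
  also have "4^n * ff s r \<le> 4^n * p powr (real r / 2)"
  proof -
    have "ff s r \<le> (s^2)^r" by (rule ff_le[OF s0 s1])
    also have "(s^2)^r = p powr (real r / 2)"
    proof -
      have "p powr (real r / 2) = (s powr 4) powr (real r / 2)" using sp s0 by simp
      also have "\<dots> = s powr (real (2 * r))" by (simp add: powr_powr)
      also have "\<dots> = s^(2*r)" using s0 by (rule powr_realpow)
      finally show ?thesis by (simp add: power_mult)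
    qed
    finally show ?thesis by simp
  qed
  finally show ?thesis by (simp add: ennreal_leI)
qed


end
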